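(* Let $(R,\mathfrak{m})$ be a finite commutative local ring which is uniserial, and let $k$ be the length of $R$ as a module over itself. Let $K$ be a field of characteristic zero. Then $\mathrm{St}^K_2(R)$ is a direct sum of exactly $k$ irreducible $\mathrm{GL}_2(R)$-representations, which are pairwise non-isomorphic and none of which is trivial. In particular, for a Dedekind domain $\mathcal{O}$ and a nonzero prime ideal $\mathfrak{p}$, $\mathrm{St}^K_2(\mathcal{O}/\mathfrak{p}^k)$ has length exactly $k$ as a $\mathrm{GL}_2(\mathcal{O}/\mathfrak{p}^k)$-representation.
   Context: A ring is uniserial if its ideals are linearly ordered by inclusion. For $n=2$, the Tits complex $\mathcal{T}_2(R)$ is the discrete set of rank one direct summands $L$ of $R^2$ with $L$ and $R^2/L$ free (i.e. lines spanned by unimodular vectors), with its natural $\mathrm{GL}_2(R)$-action, and $\mathrm{St}^K_2(R)=\tilde H_{0}(\mathcal{T}_2(R);K)$, the kernel of the augmentation $K[\mathcal{T}_2(R)]\to K$, viewed as a $\mathrm{GL}_2(R)$-representation. *)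

theory Defs
  imports "HOL-Analysis.Analysis"
begin

definition is_ideal :: "'r::comm_ring_1 set \<Rightarrow> bool" where
  "is_ideal I \<longleftrightarrow> 0 \<in> I \<and> (\<forall>x\<in>I. \<forall>y\<in>I. x + y \<in> I) \<and> (\<forall>r. \<forall>x\<in>I. r * x \<in> I)"

definition is_maximal_ideal :: "'r::comm_ring_1 set \<Rightarrow> bool" where
  "is_maximal_ideal M \<longleftrightarrow> is_ideal M \<and> M \<noteq> UNIV \<and>
     (\<forall>J. is_ideal J \<and> M \<subseteq> J \<longrightarrow> J = M \<or> J = UNIV)"

definition local_ring :: "'r::comm_ring_1 itself \<Rightarrow> bool" where
  "local_ring _ \<longleftrightarrow> (\<exists>!M::'r set. is_maximal_ideal M)"

definition uniserial :: "'r::comm_ring_1 itself \<Rightarrow> bool" where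
  "uniserial _ \<longleftrightarrow> (\<forall>I J::'r set. is_ideal I \<and> is_ideal J \<longrightarrow> I \<subseteq> J \<or> J \<subseteq> I)"

definition ring_length :: "'r::comm_ring_1 itself \<Rightarrow> nat" where
  "ring_length _ = (GREATEST n. \<exists>c :: nat \<Rightarrow> 'r set.
      (\<forall>i\<le>n. is_ideal (c i)) \<and> (\<forall>i<n. c i \<subset> c (Suc i)))"

definition GL2 :: "('r::comm_ring_1 ^2^2) set" where
  "GL2 = {g. invertible g}"

definition unimodular :: "'r::comm_ring_1 ^2 \<Rightarrow> bool" where
  "unimodular v \<longleftrightarrow> (\<exists>a b. a * v $ 1 + b * v $ 2 = 1)"

text \<open>Lines spanned by unimodular vectors (vertices of T_2(R)).\<close>
definition tits2 :: "('r::comm_ring_1 ^2) set set" where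
  "tits2 = {L. \<exists>v. unimodular v \<and> L = {(\<lambda>r. r *s v) r | r. True} }"

text \<open>The Steinberg module St_2^K(R): kernel of the augmentation K[T_2(R)] \<rightarrow> K.
  Elements of K[T_2(R)] are K-valued functions on the (finite) set of lines,
  extended by 0 outside.\<close>
definition steinberg2 :: "(('r::{comm_ring_1,finite} ^2) set \<Rightarrow> 'k::field) set" where
  "steinberg2 = {f. (\<forall>L. L \<notin> tits2 \<longrightarrow> f L = 0) \<and> (\<Sum>L\<in>tits2. f L) = 0}"

text \<open>Permutation action: (g.f)(L) = f(g^{-1} L); for invertible g, g^{-1} L is the
  preimage of L under g.\<close>
definition st_act :: "'r::comm_ring_1 ^2^2 \<Rightarrow> (('r ^2) set \<Rightarrow> 'k::field) \<Rightarrow> (('r ^2) set \<Rightarrow> 'k)" where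
  "st_act g f = (\<lambda>L. f {v. g *v v \<in> L})"

definition fsubspace :: "('a \<Rightarrow> 'k::field) set \<Rightarrow> bool" where
  "fsubspace W \<longleftrightarrow> (\<lambda>_. 0) \<in> W \<and> (\<forall>x\<in>W. \<forall>y\<in>W. (\<lambda>a. x a + y a) \<in> W)
     \<and> (\<forall>c. \<forall>x\<in>W. (\<lambda>a. c * x a) \<in> W)"

definition flinear_on :: "('a \<Rightarrow> 'k::field) set \<Rightarrow> (('a \<Rightarrow> 'k) \<Rightarrow> 'b) \<Rightarrow> ('b \<Rightarrow> 'b \<Rightarrow> 'b) \<Rightarrow> ('k \<Rightarrow> 'b \<Rightarrow> 'b) \<Rightarrow> bool" where
  "flinear_on W \<phi> pl sc \<longleftrightarrow> (\<forall>x\<in>W. \<forall>y\<in>W. \<phi> (\<lambda>a. x a + y a) = pl (\<phi> x) (\<phi> y))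
     \<and> (\<forall>c. \<forall>x\<in>W. \<phi> (\<lambda>a. c * x a) = sc c (\<phi> x))"

definition invariant :: "'g set \<Rightarrow> ('g \<Rightarrow> ('a \<Rightarrow> 'k) \<Rightarrow> ('a \<Rightarrow> 'k)) \<Rightarrow> ('a \<Rightarrow> 'k::field) set \<Rightarrow> bool" where
  "invariant G act W \<longleftrightarrow> (\<forall>g\<in>G. \<forall>w\<in>W. act g w \<in> W)"

definition irreducible_rep :: "'g set \<Rightarrow> ('g \<Rightarrow> ('a \<Rightarrow> 'k) \<Rightarrow> ('a \<Rightarrow> 'k)) \<Rightarrow> ('a \<Rightarrow> 'k::field) set \<Rightarrow> bool" where
  "irreducible_rep G act W \<longleftrightarrow> fsubspace W \<and> invariant G act W \<and> W \<noteq> {\<lambda>_. 0} \<and>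
     (\<forall>U. fsubspace U \<and> invariant G act U \<and> U \<subseteq> W \<longrightarrow> U = {\<lambda>_. 0} \<or> U = W)"

definition iso_rep :: "'g set \<Rightarrow> ('g \<Rightarrow> ('a \<Rightarrow> 'k) \<Rightarrow> ('a \<Rightarrow> 'k)) \<Rightarrow> ('a \<Rightarrow> 'k::field) set \<Rightarrow> ('a \<Rightarrow> 'k) set \<Rightarrow> bool" where
  "iso_rep G act W1 W2 \<longleftrightarrow> (\<exists>\<phi>. bij_betw \<phi> W1 W2
      \<and> flinear_on W1 \<phi> (\<lambda>x y a. x a + y a) (\<lambda>c x a. c * x a)
      \<and> (\<forall>g\<in>G. \<forall>w\<in>W1. \<phi> (act g w) = act g (\<phi> w)))"

definition iso_trivial :: "'g set \<Rightarrow> ('g \<Rightarrow> ('a \<Rightarrow> 'k) \<Rightarrow> ('a \<Rightarrow> 'k)) \<Rightarrow> ('a \<Rightarrow> 'k::field) set \<Rightarrow> bool" where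
  "iso_trivial G act W \<longleftrightarrow> (\<exists>\<phi> :: ('a \<Rightarrow> 'k) \<Rightarrow> 'k. bij_betw \<phi> W UNIV
      \<and> flinear_on W \<phi> (+) (*)
      \<and> (\<forall>g\<in>G. \<forall>w\<in>W. \<phi> (act g w) = \<phi> w))"

definition direct_sum :: "('a \<Rightarrow> 'k::field) set \<Rightarrow> nat \<Rightarrow> (nat \<Rightarrow> ('a \<Rightarrow> 'k) set) \<Rightarrow> bool" where
  "direct_sum V n W \<longleftrightarrow> (\<forall>i<n. W i \<subseteq> V) \<and>
     (\<forall>f\<in>V. \<exists>!ws. (\<forall>i. (i < n \<longrightarrow> ws i \<in> W i) \<and> (n \<le> i \<longrightarrow> ws i = (\<lambda>_. 0)))
                    \<and> f = (\<lambda>a. \<Sum>i<n. ws i a))"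

end

theory Submission
  imports Defs
begin

definition sp :: "'r::comm_ring_1 ^2 \<Rightarrow> ('r^2) set" where
  "sp v = {r *s v | r. True}"

definition det2 :: "'r::comm_ring_1 ^2 \<Rightarrow> 'r^2 \<Rightarrow> 'r" where
  "det2 v w = v$1 * w$2 - v$2 * w$1"

definition vec2 :: "'r \<Rightarrow> 'r \<Rightarrow> 'r^2" where
  "vec2 a b = (\<chi> i. if i = 1 then a else b)"

definition m2 :: "'r \<Rightarrow> 'r \<Rightarrow> 'r \<Rightarrow> 'r \<Rightarrow> 'r^2^2" where
  "m2 a b c d = (\<chi> i. if i = 1 then vec2 a b else vec2 c d)"

definition pre :: "'r::comm_ring_1^2^2 \<Rightarrow> ('r^2) set \<Rightarrow> ('r^2) set" where
  "pre g L = {v. g *v v \<in> L}"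

definition cong2 :: "'r::comm_ring_1 set \<Rightarrow> ('r^2) set \<Rightarrow> ('r^2) set \<Rightarrow> bool" where
  "cong2 I L L' \<longleftrightarrow> (\<exists>v w. unimodular v \<and> unimodular w \<and> L = sp v \<and> L' = sp w \<and> det2 v w \<in> I)"

lemma tits2_sp: "tits2 = {L. \<exists>v. unimodular v \<and> L = sp v}"
  unfolding tits2_def sp_def by simp

lemma vec2_nth [simp]: "vec2 a b $ 1 = a" "vec2 a b $ 2 = b"
  by (simp_all add: vec2_def)

lemma vec2_eta: "v = vec2 (v$1) (v$2)"
  by (simp add: vec_eq_iff forall_2)

lemma vec2_eq_iff: "vec2 a b = vec2 c d \<longleftrightarrow> a = c \<and> b = d"
  by (auto simp: vec_eq_iff forall_2)

lemma m2_nth [simp]: "m2 a b c d $ 1 = vec2 a b" "m2 a b c d $ 2 = vec2 c d"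
  by (simp_all add: m2_def)

lemma m2_mulv [simp]: "m2 a b c d *v vec2 p q = vec2 (a*p + b*q) (c*p + d*q)"
  by (simp add: vec_eq_iff forall_2 matrix_vector_mult_def sum_2)

lemma m2_mulv': "m2 a b c d *v v = vec2 (a * v$1 + b * v$2) (c * v$1 + d * v$2)"
  by (metis m2_mulv vec2_eta)

lemma m2_mult [simp]: "m2 a b c d ** m2 a' b' c' d' =
   m2 (a*a' + b*c') (a*b' + b*d') (c*a' + d*c') (c*b' + d*d')"
  by (simp add: vec_eq_iff forall_2 matrix_matrix_mult_def sum_2)

lemma mat1_m2: "(mat 1 :: 'r::comm_ring_1^2^2) = m2 1 0 0 1"
  by (simp add: vec_eq_iff forall_2 mat_def)

lemma smult_vec2 [simp]: "c *s vec2 a b = vec2 (c*a) (c*b)"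
  by (simp add: vec_eq_iff forall_2)

lemma unimodular_vec2: "unimodular (vec2 a b) \<longleftrightarrow> (\<exists>x y. x*a + y*b = 1)"
  by (simp add: unimodular_def)

lemma mulv_smult: "(A::'r::comm_ring_1^2^2) *v (c *s v) = c *s (A *v v)"
  by (simp add: vec_eq_iff matrix_vector_mult_def sum_distrib_left mult_ac)

lemma det2_smult [simp]: "det2 (c *s v) w = c * det2 v w" "det2 v (c *s w) = c * det2 v w"
  by (simp_all add: det2_def algebra_simps)

lemma det2_mulv: "\<exists>d. det2 ((A::'r::comm_ring_1^2^2) *v v) (A *v w) = d * det2 v w"
  by (rule exI[of _ "A$1$1 * A$2$2 - A$1$2 * A$2$1"])
     (simp add: det2_def matrix_vector_mult_def sum_2 algebra_simps)

lemma sp_self: "v \<in> sp v"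
  unfolding sp_def by (auto intro!: exI[of _ 1])

section \<open>Ideals and units\<close>

lemma ideal_mult: "is_ideal I \<Longrightarrow> x \<in> I \<Longrightarrow> r * x \<in> I"
  unfolding is_ideal_def by blast
lemma ideal_add: "is_ideal I \<Longrightarrow> x \<in> I \<Longrightarrow> y \<in> I \<Longrightarrow> x + y \<in> I"
  unfolding is_ideal_def by blast
lemma ideal_zero: "is_ideal I \<Longrightarrow> 0 \<in> I"
  unfolding is_ideal_def by blast
lemma ideal_neg: "is_ideal I \<Longrightarrow> x \<in> I \<Longrightarrow> - x \<in> I"
  using ideal_mult[of I x "-1"] by simp
lemma ideal_diff: "is_ideal I \<Longrightarrow> x \<in> I \<Longrightarrow> y \<in> I \<Longrightarrow> x - y \<in> I"
  using ideal_add[of I x "-y"] ideal_neg by fastforce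
lemma ideal_mult_right: "is_ideal I \<Longrightarrow> x \<in> I \<Longrightarrow> x * r \<in> I"
  using ideal_mult[of I x r] by (simp add: mult.commute)

lemma ideal_UNIV: "is_ideal UNIV" unfolding is_ideal_def by simp
lemma ideal_0: "is_ideal {0::'r::comm_ring_1}" unfolding is_ideal_def by simp

definition pid :: "'r::comm_ring_1 \<Rightarrow> 'r set" where "pid b = {r * b | r. True}"

lemma ideal_pid: "is_ideal (pid b)"
  unfolding is_ideal_def pid_def
  by (auto simp: algebra_simps intro: exI[of _ 0]) (metis distrib_right, metis mult.assoc)

lemma pid_self: "b \<in> pid b" unfolding pid_def by (auto intro!: exI[of _ 1])

lemma pid_sub: "is_ideal I \<Longrightarrow> b \<in> I \<Longrightarrow> pid b \<subseteq> I"
  unfolding pid_def using ideal_mult by blast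

lemma unit_mult_iff: "(a * b) dvd (1::'r::comm_ring_1) \<longleftrightarrow> a dvd 1 \<and> b dvd 1"
  by (metis dvd_mult_left dvd_mult_right mult_1_right mult_dvd_mono)

lemma nonunit_add:
  fixes a b :: "'r::comm_ring_1"
  assumes U: "uniserial TYPE('r)" and "\<not> a dvd 1" "\<not> b dvd 1"
  shows "\<not> (a + b) dvd 1"
proof -
  have "pid a \<subseteq> pid b \<or> pid b \<subseteq> pid a"
    using U ideal_pid unfolding uniserial_def by blast
  then show ?thesis
  proof
    assume "pid a \<subseteq> pid b"
    then obtain r where "a = r * b" using pid_self[of a] unfolding pid_def by blast
    then have "a + b = (r + 1) * b" by (simp add: algebra_simps)
    then show ?thesis using assms(3) by (metis dvd_triv_right dvd_trans)
  next
    assume "pid b \<subseteq> pid a"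
    then obtain r where "b = r * a" using pid_self[of b] unfolding pid_def by blast
    then have "a + b = (r + 1) * a" by (simp add: algebra_simps)
    then show ?thesis using assms(2) by (metis dvd_triv_right dvd_trans)
  qed
qed

lemma unimodular_unit:
  fixes v :: "'r::comm_ring_1^2"
  assumes U: "uniserial TYPE('r)" and "unimodular v"
  shows "(v$1) dvd 1 \<or> (v$2) dvd 1"
proof (rule ccontr)
  assume nn: "\<not> ((v$1) dvd 1 \<or> (v$2) dvd 1)"
  obtain a b where ab: "a * v$1 + b * v$2 = 1" using assms(2) unfolding unimodular_def by blast
  have "\<not> (a * v$1) dvd 1" "\<not> (b * v$2) dvd 1" using nn unit_mult_iff by auto
  then have "\<not> (a * v$1 + b * v$2) dvd 1" using nonunit_add[OF U] by blast
  then show False using ab by simp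
qed

lemma pid_comparable:
  assumes U: "uniserial TYPE('r::comm_ring_1)" and "is_ideal (J::'r set)"
  shows "pid b \<subseteq> J \<or> J \<subseteq> pid b"
  using U assms(2) ideal_pid unfolding uniserial_def by blast

lemma unimod_sp_eq:
  assumes v: "unimodular v" and "sp v = sp w"
  shows "\<exists>u. u dvd 1 \<and> w = u *s v"
proof -
  have "w \<in> sp v" using assms sp_self by metis
  then obtain l where l: "w = l *s v" unfolding sp_def by blast
  have "v \<in> sp w" using assms sp_self by metis
  then obtain m where m: "v = m *s w" unfolding sp_def by blast
  obtain a b where ab: "a * v$1 + b * v$2 = 1" using v unfolding unimodular_def by blast
  have "v = m *s (l *s v)" using l m by simp
  then have "v = (m * l) *s v" by (simp add: vector_smult_assoc)
  then have "v$1 = (m*l) * v$1" "v$2 = (m*l) * v$2" by (metis vector_smult_component)+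
  then have "m * l = (m*l) * (a * v$1 + b * v$2)" using ab by simp
  also have "\<dots> = a * ((m*l) * v$1) + b * ((m*l) * v$2)" by (simp add: algebra_simps)
  also have "\<dots> = 1" using \<open>v$1 = _\<close> \<open>v$2 = _\<close> ab by simp
  finally have "1 = l * m" by (simp add: mult.commute)
  then have "l dvd 1" by (rule dvdI)
  then show ?thesis using l by blast
qed

lemma cong2_iff:
  assumes I: "is_ideal I" and v: "unimodular v" and w: "unimodular w"
  shows "cong2 I (sp v) (sp w) \<longleftrightarrow> det2 v w \<in> I"
proof
  assume "cong2 I (sp v) (sp w)"
  then obtain v' w' where *: "unimodular v'" "unimodular w'" "sp v = sp v'" "sp w = sp w'" "det2 v' w' \<in> I"
    unfolding cong2_def by blast
  obtain u where u: "u dvd 1" "v' = u *s v" using unimod_sp_eq[OF v *(3)] by blast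
  obtain u' where u': "u' dvd 1" "w' = u' *s w" using unimod_sp_eq[OF w *(4)] by blast
  have dd: "det2 v' w' = (u * u') * det2 v w" using u u' by simp
  obtain i where "1 = (u*u') * i" using u u' unit_mult_iff by (metis dvdE)
  have "i * det2 v' w' = ((u*u')*i) * det2 v w" unfolding dd by (simp only: mult_ac)
  also have "(u*u')*i = 1" using \<open>1 = _\<close> by simp
  finally have "det2 v w = i * det2 v' w'" by simp
  then show "det2 v w \<in> I" using ideal_mult[OF I *(5)] by simp
next
  assume "det2 v w \<in> I" then show "cong2 I (sp v) (sp w)" using v w unfolding cong2_def by blast
qed

lemma cong2_tits: "cong2 I L L' \<Longrightarrow> L \<in> tits2 \<and> L' \<in> tits2"
  unfolding cong2_def tits2_sp by blast

lemma cong2_refl: "is_ideal I \<Longrightarrow> L \<in> tits2 \<Longrightarrow> cong2 I L L"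
  unfolding tits2_sp by (auto simp: cong2_iff det2_def mult.commute ideal_zero)

lemma cong2_sym: assumes "is_ideal I" "cong2 I L L'" shows "cong2 I L' L"
proof -
  obtain v w where *: "unimodular v" "unimodular w" "L = sp v" "L' = sp w" "det2 v w \<in> I"
    using assms unfolding cong2_def by blast
  have "det2 w v = - det2 v w" by (simp add: det2_def algebra_simps)
  then have "det2 w v \<in> I" using ideal_neg[OF assms(1) *(5)] by simp
  then show ?thesis unfolding cong2_def using * by blast
qed

lemma pluecker: "det2 v w * (x::'r::comm_ring_1^2)$i = det2 v x * w$i + det2 x w * v$i"
proof -
  have "det2 v w * x$1 = det2 v x * w$1 + det2 x w * v$1"
       "det2 v w * x$2 = det2 v x * w$2 + det2 x w * v$2"
    by (simp_all add: det2_def algebra_simps)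
  note h = this
  show ?thesis
  proof (cases "i = 1")
    case True then show ?thesis using h(1) by simp
  next
    case False then have "i = 2" using exhaust_2[of i] by blast
    then show ?thesis using h(2) by simp
  qed
qed

lemma cong2_trans: assumes I: "is_ideal I" "cong2 I L L'" "cong2 I L' L''" shows "cong2 I L L''"
proof -
  obtain v x where *: "unimodular v" "unimodular x" "L = sp v" "L' = sp x" "det2 v x \<in> I"
    using assms unfolding cong2_def by blast
  obtain w where w: "unimodular w" "L'' = sp w" using cong2_tits[OF assms(3)] unfolding tits2_sp by blast
  have xw: "det2 x w \<in> I" using assms(3) *(2,4) w cong2_iff[OF I(1) *(2) w(1)] by simp
  obtain a b where ab: "a * x$1 + b * x$2 = 1" using *(2) unfolding unimodular_def by blast
  have "det2 v w = det2 v w * (a * x$1 + b * x$2)" by (simp only: ab mult_1_right)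
  also have "\<dots> = a * (det2 v w * x$1) + b * (det2 v w * x$2)" by (simp add: algebra_simps)
  also have "\<dots> \<in> I" unfolding pluecker[of v w x 1] pluecker[of v w x 2]
    by (rule ideal_add[OF I(1) ideal_mult[OF I(1)] ideal_mult[OF I(1)]];
        rule ideal_add[OF I(1) ideal_mult_right[OF I(1) *(5)] ideal_mult_right[OF I(1) xw]])
  finally show ?thesis unfolding cong2_def using * w by blast
qed

lemma cong2_mono: "I \<subseteq> J \<Longrightarrow> cong2 I L L' \<Longrightarrow> cong2 J L L'"
  unfolding cong2_def by blast

lemma cong2_UNIV: "L \<in> tits2 \<Longrightarrow> L' \<in> tits2 \<Longrightarrow> cong2 UNIV L L'"
  unfolding cong2_def tits2_sp by blast

lemma cong2_zero: assumes "cong2 {0} L L'" shows "L = L'"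
proof -
  obtain v w where *: "unimodular v" "unimodular w" "L = sp v" "L' = sp w" "det2 v w = 0"
    using assms unfolding cong2_def by blast
  have sub: "sp y \<subseteq> sp x" if ux: "unimodular x" and dx: "det2 x y = 0" for x y :: "'a^2"
  proof -
    obtain a b where ab: "a * x$1 + b * x$2 = 1" using ux unfolding unimodular_def by blast
    have "y = (a * y$1 + b * y$2) *s x"
    proof -
      have d: "x$1 * y$2 = x$2 * y$1" using dx by (simp add: det2_def)
      have "(a * y$1 + b * y$2) * x$1 = a * y$1 * x$1 + b * (x$1 * y$2)" by (simp add: algebra_simps)
      also have "\<dots> = a * y$1 * x$1 + b * (x$2 * y$1)" by (simp only: d)
      also have "\<dots> = y$1 * (a * x$1 + b * x$2)" by (simp add: algebra_simps)
      finally have e1: "(a * y$1 + b * y$2) * x$1 = y$1 * (a * x$1 + b * x$2)" .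
      have "(a * y$1 + b * y$2) * x$2 = a * (x$2 * y$1) + b * y$2 * x$2" by (simp add: algebra_simps)
      also have "\<dots> = a * (x$1 * y$2) + b * y$2 * x$2" by (simp only: d)
      also have "\<dots> = y$2 * (a * x$1 + b * x$2)" by (simp add: algebra_simps)
      finally have e2: "(a * y$1 + b * y$2) * x$2 = y$2 * (a * x$1 + b * x$2)" .
      note e1 moreover note e2
      ultimately have "(a * y$1 + b * y$2) * x$1 = y$1" "(a * y$1 + b * y$2) * x$2 = y$2"
        by (simp_all only: ab mult_1_right)
      then show ?thesis unfolding vec_eq_iff forall_2 vector_smult_component by simp
    qed
    then obtain c where yc: "y = c *s x" by blast
    show ?thesis
    proof
      fix z assume "z \<in> sp y"
      then obtain r where "z = r *s y" unfolding sp_def by blast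
      then have "z = r *s (c *s x)" using yc by simp
      then have "z = (r * c) *s x" by (simp add: vector_smult_assoc)
      then show "z \<in> sp x" unfolding sp_def by blast
    qed
  qed
  have "det2 w v = - det2 v w" by (simp add: det2_def algebra_simps)
  then have "det2 w v = 0" using *(5) by simp
  have "sp w \<subseteq> sp v" by (rule sub[OF *(1) *(5)])
  moreover have "sp v \<subseteq> sp w" by (rule sub[OF *(2) \<open>det2 w v = 0\<close>])
  ultimately show ?thesis using *(3,4) by (simp only: set_eq_subset) blast
qed

section \<open>Matrix action on lines\<close>

lemma inv_ex: "invertible g \<Longrightarrow> \<exists>h. g ** h = mat 1 \<and> h ** g = mat 1"
  unfolding invertible_def by blast

lemma unimod_of_mulv:
  assumes "unimodular ((H::'r::comm_ring_1^2^2) *v w)" shows "unimodular w"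
proof -
  obtain a b where ab: "a * (H *v w)$1 + b * (H *v w)$2 = 1" using assms unfolding unimodular_def by blast
  show ?thesis unfolding unimodular_def
    apply (rule exI[of _ "a * H$1$1 + b * H$2$1"], rule exI[of _ "a * H$1$2 + b * H$2$2"])
    using ab by (simp add: matrix_vector_mult_def sum_2 algebra_simps)
qed

lemma pre_sp:
  assumes "invertible A" "A *v u' = u"
  shows "pre A (sp u) = sp u'"
proof -
  obtain H where H: "H ** A = mat 1" using assms(1) inv_ex by blast
  have inj: "x = y" if "A *v x = A *v y" for x y
    by (metis H matrix_vector_mul_assoc matrix_vector_mul_lid that)
  show ?thesis
  proof (intro set_eqI iffI)
    fix x assume "x \<in> pre A (sp u)"
    then obtain r where r: "A *v x = r *s u" unfolding pre_def sp_def by blast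
    then have "A *v x = A *v (r *s u')" using assms(2) by (simp add: mulv_smult)
    then have "x = r *s u'" by (rule inj)
    then show "x \<in> sp u'" unfolding sp_def by blast
  next
    fix x assume "x \<in> sp u'"
    then obtain r where r: "x = r *s u'" unfolding sp_def by blast
    then have "A *v x = r *s u" using assms(2) by (simp add: mulv_smult)
    then show "x \<in> pre A (sp u)" unfolding pre_def sp_def by blast
  qed
qed

lemma pre_comp: "pre (g ** g') L = pre g' (pre g L)"
  unfolding pre_def by (simp add: matrix_vector_mul_assoc)

lemma pre_id [simp]: "pre (mat 1) L = L"
  unfolding pre_def by simp

lemma pre_tits:
  assumes "invertible g" "L \<in> tits2" shows "pre g L \<in> tits2"
proof -
  obtain v where v: "unimodular v" "L = sp v" using assms(2) unfolding tits2_sp by blast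
  obtain H where H: "g ** H = mat 1" "H ** g = mat 1" using assms(1) inv_ex by blast
  have "g *v (H *v v) = v" by (simp add: matrix_vector_mul_assoc H)
  then have "pre g L = sp (H *v v)" using pre_sp assms(1) v by metis
  moreover have "unimodular (H *v v)"
    by (rule unimod_of_mulv[of g]) (simp add: \<open>g *v (H *v v) = v\<close> v)
  ultimately show ?thesis unfolding tits2_sp by blast
qed

lemma pre_inv:
  assumes "g ** h = mat 1" shows "pre h (pre g L) = L"
  using pre_comp[of g h L] assms by simp

lemma invertible_inv: "g ** h = mat 1 \<Longrightarrow> h ** g = mat 1 \<Longrightarrow> invertible h"
  unfolding invertible_def by (rule exI[of _ g]) simp

lemma pre_notin:
  assumes "invertible g" "L \<notin> tits2" shows "pre g L \<notin> tits2"
proof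
  obtain H where H: "g ** H = mat 1" "H ** g = mat 1" using assms(1) inv_ex by blast
  assume "pre g L \<in> tits2"
  then have "pre H (pre g L) \<in> tits2" using pre_tits invertible_inv[OF H(1,2)] by blast
  then show False using pre_inv[OF H(1)] assms(2) by simp
qed

lemma pre_bij: assumes "invertible g" shows "bij_betw (pre g) tits2 tits2"
proof -
  obtain H where H: "g ** H = mat 1" "H ** g = mat 1" using assms(1) inv_ex by blast
  show ?thesis
    using pre_tits[OF invertible_inv[OF H(1,2)]] pre_tits[OF assms]
    by (intro bij_betw_byWitness[where f'="pre H"]) (auto simp: pre_inv H)
qed

lemma cong2_pre:
  assumes I: "is_ideal I" and g: "invertible g" and c: "cong2 I L L'"
  shows "cong2 I (pre g L) (pre g L')"
proof -
  obtain v w where *: "unimodular v" "unimodular w" "L = sp v" "L' = sp w" "det2 v w \<in> I"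
    using c unfolding cong2_def by blast
  obtain H where H: "g ** H = mat 1" "H ** g = mat 1" using g inv_ex by blast
  have e: "g *v (H *v x) = x" for x by (simp add: matrix_vector_mul_assoc H)
  have u: "unimodular (H *v x)" if "unimodular x" for x
    by (rule unimod_of_mulv[of g]) (simp add: e that)
  obtain d where "det2 (H *v v) (H *v w) = d * det2 v w" using det2_mulv by blast
  then have "det2 (H *v v) (H *v w) \<in> I" using ideal_mult[OF I *(5)] by simp
  moreover have "pre g L = sp (H *v v)" "pre g L' = sp (H *v w)" using pre_sp[OF g e] *(3,4) by auto
  ultimately show ?thesis unfolding cong2_def using u *(1,2) by blast
qed

lemma cong2_pre_iff:
  assumes I: "is_ideal I" and g: "invertible g"
  shows "cong2 I (pre g L) (pre g L') \<longleftrightarrow> cong2 I L L'"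
proof
  obtain H where H: "g ** H = mat 1" "H ** g = mat 1" using g inv_ex by blast
  assume "cong2 I (pre g L) (pre g L')"
  from cong2_pre[OF I invertible_inv[OF H(1,2)] this] show "cong2 I L L'"
    by (simp add: pre_inv[OF H(1)])
qed (rule cong2_pre[OF I g])

definition chainP :: "'r::comm_ring_1 itself \<Rightarrow> nat \<Rightarrow> (nat \<Rightarrow> 'r set) \<Rightarrow> bool" where
  "chainP _ n c \<longleftrightarrow> (\<forall>i\<le>n. is_ideal (c i)) \<and> (\<forall>i<n. c i \<subset> c (Suc i))"

lemma chain_card:
  fixes c :: "nat \<Rightarrow> 'r::finite set"
  assumes "\<forall>i<n. c i \<subset> c (Suc i)"
  shows "i \<le> n \<Longrightarrow> i \<le> card (c i)"
proof (induction i)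
  case 0 then show ?case by simp
next
  case (Suc i)
  then have "card (c i) < card (c (Suc i))" using assms by (intro psubset_card_mono) auto
  then show ?case using Suc by simp
qed

lemma chain_bound:
  fixes c :: "nat \<Rightarrow> 'r::finite set"
  assumes "\<forall>i<n. c i \<subset> c (Suc i)"
  shows "n \<le> CARD('r)"
  using chain_card[OF assms, of n] card_mono[of UNIV "c n"] by simp

lemma ring_length_chain:
  "ring_length (R::'r::{comm_ring_1,finite} itself) = (GREATEST n. \<exists>c. chainP TYPE('r) n c)"
  unfolding ring_length_def chainP_def by simp

lemma chain_max:
  fixes R :: "'r::{comm_ring_1,finite} itself"
  defines "k \<equiv> ring_length R"
  shows "\<exists>c. chainP TYPE('r) k c" and "chainP TYPE('r) n c \<Longrightarrow> n \<le> k"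
proof -
  have ex0: "\<exists>c. chainP TYPE('r) 0 c" unfolding chainP_def
    by (rule exI[of _ "\<lambda>_. UNIV"]) (simp add: ideal_UNIV)
  have bd: "\<forall>y. (\<exists>c. chainP TYPE('r) y c) \<longrightarrow> y \<le> CARD('r)"
    unfolding chainP_def using chain_bound by blast
  show "\<exists>c. chainP TYPE('r) k c" unfolding k_def ring_length_chain
    by (rule GreatestI_nat[where P="\<lambda>n. \<exists>c. chainP TYPE('r) n c" and k=0 and b="CARD('r)"])
       (use ex0 bd in blast)+
  show "chainP TYPE('r) n c \<Longrightarrow> n \<le> k" unfolding k_def ring_length_chain
    by (rule Greatest_le_nat[where b="CARD('r)"]) (use bd in blast)+
qed

lemma chain_good:
  fixes R :: "'r::{comm_ring_1,finite} itself"
  defines "k \<equiv> ring_length R"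
  shows "\<exists>c::nat \<Rightarrow> 'r set. (\<forall>i\<le>k. is_ideal (c i)) \<and> (\<forall>i<k. c i \<subset> c (Suc i)) \<and>
     c 0 = {0} \<and> c k = UNIV \<and>
     (\<forall>i<k. \<forall>J. is_ideal J \<and> c i \<subseteq> J \<and> J \<subseteq> c (Suc i) \<longrightarrow> J = c i \<or> J = c (Suc i))"
proof -
  obtain c where c: "chainP TYPE('r) k c" using chain_max k_def by blast
  have ideal: "\<forall>i\<le>k. is_ideal (c i)" and strict: "\<forall>i<k. c i \<subset> c (Suc i)"
    using c unfolding chainP_def by auto
  have le: "n \<le> k" if "chainP TYPE('r) n c'" for n c' using chain_max(2) that k_def by blast
  have c0: "c 0 = {0}"
  proof (rule ccontr)
    assume ne: "c 0 \<noteq> {0}"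
    have "0 \<in> c 0" using ideal ideal_zero by blast
    then have ps: "{0} \<subset> c 0" using ne by blast
    define c' where "c' i = (if i = 0 then {0} else c (i - 1))" for i
    have "chainP TYPE('r) (Suc k) c'" unfolding chainP_def
    proof (intro conjI allI impI)
      fix i assume "i \<le> Suc k" then show "is_ideal (c' i)"
        using ideal ideal_0 unfolding c'_def by auto
    next
      fix i assume i: "i < Suc k" show "c' i \<subset> c' (Suc i)"
      proof (cases i)
        case 0 then show ?thesis using ps unfolding c'_def by simp
      next
        case (Suc j) then show ?thesis using strict i unfolding c'_def by simp
      qed
    qed
    then show False using le by fastforce
  qed
  have ck: "c k = UNIV"
  proof (rule ccontr)
    assume ne: "c k \<noteq> UNIV"
    define c' where "c' i = (if i = Suc k then UNIV else c i)" for i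
    have "chainP TYPE('r) (Suc k) c'" unfolding chainP_def
    proof (intro conjI allI impI)
      fix i assume "i \<le> Suc k" then show "is_ideal (c' i)"
        using ideal ideal_UNIV unfolding c'_def by (auto simp: le_Suc_eq)
    next
      fix i assume i: "i < Suc k" show "c' i \<subset> c' (Suc i)"
      proof (cases "i = k")
        case True then show ?thesis using ne unfolding c'_def by auto
      next
        case False then show ?thesis using strict i unfolding c'_def by simp
      qed
    qed
    then show False using le by fastforce
  qed
  have cons: "\<forall>i<k. \<forall>J. is_ideal J \<and> c i \<subseteq> J \<and> J \<subseteq> c (Suc i) \<longrightarrow> J = c i \<or> J = c (Suc i)"
  proof (intro allI impI; rule ccontr)
    fix i J assume i: "i < k" and J: "is_ideal J \<and> c i \<subseteq> J \<and> J \<subseteq> c (Suc i)"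
      and ne: "\<not> (J = c i \<or> J = c (Suc i))"
    define c' where "c' m = (if m \<le> i then c m else if m = Suc i then J else c (m - 1))" for m
    have "chainP TYPE('r) (Suc k) c'" unfolding chainP_def
    proof (intro conjI allI impI)
      fix m assume "m \<le> Suc k" then show "is_ideal (c' m)"
        using ideal J i unfolding c'_def by auto
    next
      fix m assume m: "m < Suc k" show "c' m \<subset> c' (Suc m)"
      proof -
        consider "m < i" | "m = i" | "m = Suc i" | "m > Suc i" by linarith
        then show ?thesis
        proof cases
          case 1 then show ?thesis using strict i unfolding c'_def by simp
        next
          case 2 then show ?thesis using J ne unfolding c'_def by auto
        next
          case 3 then show ?thesis using J ne unfolding c'_def by auto
        next
          case 4 then have "m - 1 < k" "Suc (m - 1) = m" using m by auto
          moreover have "c (m - 1) \<subset> c (Suc (m - 1))" using strict \<open>m - 1 < k\<close> by blast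
          ultimately have "c (m - 1) \<subset> c m" by simp
          then show ?thesis using 4 unfolding c'_def by simp
        qed
      qed
    qed
    then show False using le by fastforce
  qed
  show ?thesis using ideal strict c0 ck cons by blast
qed

lemma chain_mono:
  assumes "\<forall>i<k. c i \<subset> c (Suc i)" "i \<le> j" "j \<le> k"
  shows "c i \<subseteq> c j"
  using assms(2,3)
proof (induction j)
  case 0 then show ?case by simp
next
  case (Suc j)
  show ?case
  proof (cases "i = Suc j")
    case True then show ?thesis by simp
  next
    case False then have "c i \<subseteq> c j" using Suc by simp
    then show ?thesis using assms(1) Suc(3) by (meson Suc_le_lessD psubset_imp_subset subset_trans)
  qed
qed

definition e1 :: "'r::comm_ring_1^2" where "e1 = vec2 1 0"
definition L0 :: "('r::comm_ring_1^2) set" where "L0 = sp e1"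
definition cls :: "'r::comm_ring_1 set \<Rightarrow> ('r^2) set \<Rightarrow> ('r^2) set set" where
  "cls I L = {L'. cong2 I L L'}"

definition Wp :: "'r::{comm_ring_1,finite} set \<Rightarrow> 'r set \<Rightarrow> (('r^2) set \<Rightarrow> 'k::field) set" where
  "Wp I J = {f \<in> steinberg2. (\<forall>L L'. cong2 I L L' \<longrightarrow> f L = f L') \<and> (\<forall>L\<in>tits2. sum f (cls J L) = 0)}"

definition ip :: "(('r::comm_ring_1^2) set \<Rightarrow> 'k::field) \<Rightarrow> (('r^2) set \<Rightarrow> 'k) \<Rightarrow> 'k" where
  "ip f h = (\<Sum>L\<in>tits2. f L * h L)"

lemma unimod_e1: "unimodular (e1::'r::comm_ring_1^2)"
  unfolding e1_def unimodular_vec2 by (auto intro!: exI[of _ 1] exI[of _ 0])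

lemma L0_tits: "L0 \<in> tits2"
  unfolding L0_def tits2_sp using unimod_e1 by blast

lemma cong2_L0: assumes "is_ideal I" "unimodular v" shows "cong2 I L0 (sp v) \<longleftrightarrow> v$2 \<in> I"
proof -
  have "det2 e1 v = v$2" by (simp add: det2_def e1_def)
  then show ?thesis unfolding L0_def using cong2_iff[OF assms(1) unimod_e1 assms(2)] by simp
qed

lemma cls_tits: "cls I L \<subseteq> tits2" unfolding cls_def using cong2_tits by blast

lemma finite_lines: "finite (A :: ('r::finite ^2) set set)" by (rule finite_subset[of _ UNIV]) auto

lemma GL2_mult: "g \<in> GL2 \<Longrightarrow> h \<in> GL2 \<Longrightarrow> g ** h \<in> GL2"
  unfolding GL2_def using invertible_mult by blast

lemma GL2_one: "mat 1 \<in> GL2"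
  unfolding GL2_def using invertible_inv[of "mat 1" "mat 1"] by simp

lemma GL2_inv: assumes "g \<in> GL2" shows "\<exists>h\<in>GL2. g ** h = mat 1 \<and> h ** g = mat 1"
proof -
  obtain h where h: "g ** h = mat 1" "h ** g = mat 1" using assms inv_ex unfolding GL2_def by blast
  then have "h \<in> GL2" unfolding GL2_def using invertible_inv by blast
  then show ?thesis using h by blast
qed

lemma st_act_comp: "st_act g (st_act h f) = st_act (g ** h) f"
  unfolding st_act_def by (simp add: pre_comp[unfolded pre_def])

lemma st_act_id: "st_act (mat 1) f = f"
  unfolding st_act_def by simp

lemma st_act_pre: "st_act g f L = f (pre g L)"
  unfolding st_act_def pre_def by simp

lemma sum_pre:
  assumes "g \<in> GL2" shows "(\<Sum>L\<in>tits2. F (pre g L)) = (\<Sum>L\<in>tits2. F L)"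
  using sum.reindex_bij_betw[OF pre_bij, of g F] assms unfolding GL2_def by simp

lemma cls_pre_bij:
  assumes I: "is_ideal I" and g: "g \<in> GL2"
  shows "bij_betw (pre g) (cls I L) (cls I (pre g L))"
proof -
  obtain h where h: "h \<in> GL2" "g ** h = mat 1" "h ** g = mat 1" using GL2_inv[OF g] by blast
  have gi: "invertible g" "invertible h" using g h unfolding GL2_def by auto
  show ?thesis
  proof (rule bij_betw_byWitness[where f'="pre h"])
    show "\<forall>a\<in>cls I L. pre h (pre g a) = a" using pre_inv[OF h(2)] by simp
    show "\<forall>a'\<in>cls I (pre g L). pre g (pre h a') = a'" using pre_inv[OF h(3)] by simp
    show "pre g ` cls I L \<subseteq> cls I (pre g L)" unfolding cls_def using cong2_pre[OF I gi(1)] by blast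
    show "pre h ` cls I (pre g L) \<subseteq> cls I L"
    proof
      fix x assume "x \<in> pre h ` cls I (pre g L)"
      then obtain a where a: "x = pre h a" "cong2 I (pre g L) a" unfolding cls_def by blast
      have "cong2 I (pre h (pre g L)) (pre h a)" by (rule cong2_pre[OF I gi(2) a(2)])
      then show "x \<in> cls I L" unfolding cls_def a(1) pre_inv[OF h(2)] by simp
    qed
  qed
qed

lemma sum_cls_pre:
  assumes I: "is_ideal I" and g: "g \<in> GL2"
  shows "(\<Sum>L\<in>cls I L1. F (pre g L)) = (\<Sum>L\<in>cls I (pre g L1). F L)"
  using sum.reindex_bij_betw[OF cls_pre_bij[OF I g], of F L1] by simp

lemma fsubspace_sum:
  assumes U: "fsubspace U" and "finite S" and "\<forall>x\<in>S. F x \<in> U"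
  shows "(\<lambda>a. \<Sum>x\<in>S. F x a) \<in> U"
  using assms(2,3)
proof (induction S rule: finite_induct)
  case empty then show ?case using U unfolding fsubspace_def by simp
next
  case (insert x S)
  then have "(\<lambda>a. F x a + (\<Sum>x\<in>S. F x a)) \<in> U"
    using U unfolding fsubspace_def by auto
  then show ?case using insert by simp
qed

lemma fsubspace_scale: "fsubspace U \<Longrightarrow> x \<in> U \<Longrightarrow> (\<lambda>a. c * x a) \<in> U"
  unfolding fsubspace_def by blast

lemma fsubspace_add: "fsubspace U \<Longrightarrow> x \<in> U \<Longrightarrow> y \<in> U \<Longrightarrow> (\<lambda>a. x a + y a) \<in> U"
  unfolding fsubspace_def by blast

lemma fsubspace_diff: "fsubspace U \<Longrightarrow> x \<in> U \<Longrightarrow> y \<in> U \<Longrightarrow> (\<lambda>a. x a - y a) \<in> U"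
  using fsubspace_add[of U x "\<lambda>a. (-1) * y a"] fsubspace_scale[of U y "-1"] by simp

lemma fsubspace_zero: "fsubspace U \<Longrightarrow> (\<lambda>_. 0) \<in> U"
  unfolding fsubspace_def by blast

lemma steinberg2_iff: "f \<in> steinberg2 \<longleftrightarrow> (\<forall>L. L \<notin> tits2 \<longrightarrow> f L = 0) \<and> sum f tits2 = 0"
  unfolding steinberg2_def by simp

lemma Wp_fsubspace: "fsubspace (Wp I J)"
  unfolding fsubspace_def Wp_def steinberg2_iff
  by (auto simp: sum.distrib sum_distrib_left[symmetric])

lemma st_act_steinberg:
  assumes g: "g \<in> GL2" and f: "f \<in> steinberg2"
  shows "st_act g f \<in> steinberg2"
proof -
  have gi: "invertible g" using g unfolding GL2_def by simp
  show ?thesis unfolding steinberg2_iff st_act_pre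
    using f pre_notin[OF gi] sum_pre[OF g, of f] unfolding steinberg2_iff by auto
qed

lemma Wp_invariant:
  assumes I: "is_ideal I" and J: "is_ideal J" and g: "g \<in> GL2" and f: "f \<in> Wp I J"
  shows "st_act g f \<in> Wp I J"
proof -
  have gi: "invertible g" using g unfolding GL2_def by simp
  have "st_act g f \<in> steinberg2" using st_act_steinberg[OF g] f unfolding Wp_def by blast
  moreover have "\<forall>L L'. cong2 I L L' \<longrightarrow> st_act g f L = st_act g f L'"
    using f cong2_pre[OF I gi] unfolding Wp_def st_act_pre by blast
  moreover have "\<forall>L\<in>tits2. sum (st_act g f) (cls J L) = 0"
    using f sum_cls_pre[OF J g, of f] pre_tits[OF gi] unfolding Wp_def st_act_pre by auto
  ultimately show ?thesis unfolding Wp_def by blast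
qed

lemma ip_pre:
  assumes g: "g \<in> GL2" shows "ip (st_act g a) (st_act g b) = ip a b"
  unfolding ip_def st_act_pre using sum_pre[OF g, of "\<lambda>L. a L * b L"] by simp

definition Bg :: "('r::comm_ring_1^2^2) set" where "Bg = {g \<in> GL2. pre g L0 = L0}"

lemma sp_unit: assumes "u dvd 1" shows "sp (u *s v) = sp v"
proof -
  obtain i where i: "1 = u * i" using assms by (rule dvdE)
  show ?thesis unfolding sp_def
  proof (intro set_eqI iffI)
    fix x assume "x \<in> {r *s (u *s v) |r. True}"
    then obtain r where "x = r *s (u *s v)" by blast
    then have "x = (r * u) *s v" by (simp add: vector_smult_assoc)
    then show "x \<in> {r *s v |r. True}" by blast
  next
    fix x assume "x \<in> {r *s v |r. True}"
    then obtain r where "x = r *s v" by blast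
    have "(r * i) *s (u *s v) = (r * (u * i)) *s v" by (simp add: vector_smult_assoc mult_ac)
    then have "x = (r * i) *s (u *s v)" using \<open>x = r *s v\<close> i by simp
    then show "x \<in> {r *s (u *s v) |r. True}" by blast
  qed
qed

lemma upper_Bg:
  assumes x: "x dvd 1" and z: "z dvd 1"
  shows "m2 x y 0 z \<in> Bg"
proof -
  obtain xi where xi: "1 = x * xi" using x by (rule dvdE)
  obtain zi where zi: "1 = z * zi" using z by (rule dvdE)
  let ?A = "m2 x y 0 z" and ?H = "m2 xi (-(xi*y*zi)) 0 zi"
  have "x * (- (xi * y * zi)) + y * zi = (-(x*xi)) * y * zi + y * zi" by (simp add: algebra_simps)
  then have a1: "x * (- (xi * y * zi)) + y * zi = 0" by (simp add: xi[symmetric])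
  have "xi * y + - (xi * y * zi) * z = xi * y - xi * y * (z * zi)" by (simp add: algebra_simps)
  then have a2: "xi * y + - (xi * y * zi) * z = 0" by (simp add: zi[symmetric])
  have AH: "?A ** ?H = mat 1" unfolding mat1_m2 m2_mult
    using a1 xi zi by (simp add: mult.commute)
  have HA: "?H ** ?A = mat 1" unfolding mat1_m2 m2_mult
    using a2 xi zi by (simp add: mult.commute)
  have inv: "invertible ?A" using invertible_inv[OF HA AH] .
  have "?A *v (xi *s e1) = e1" unfolding e1_def smult_vec2 m2_mulv using xi by (simp add: mult.commute)
  then have "pre ?A L0 = sp (xi *s e1)" unfolding L0_def by (rule pre_sp[OF inv])
  also have "\<dots> = L0" unfolding L0_def by (rule sp_unit) (use xi in \<open>metis dvdI mult.commute\<close>)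
  finally show ?thesis unfolding Bg_def GL2_def using inv by simp
qed

lemma associate:
  fixes a b :: "'r::comm_ring_1"
  assumes U: "uniserial TYPE('r)" and r: "b = r * a" and s: "a = s * b"
  shows "\<exists>u. u dvd 1 \<and> b = u * a"
proof (cases "a = 0")
  case True then show ?thesis using r by (intro exI[of _ 1]) simp
next
  case False
  have "a = (s * r) * a" using r s by (simp add: mult.assoc)
  then have e: "(1 - s * r) * a = 0" by (simp add: algebra_simps)
  have "s * r dvd 1"
  proof (rule ccontr)
    assume "\<not> s * r dvd 1"
    moreover have "(1 - s * r) + s * r = 1" by simp
    ultimately have "(1 - s * r) dvd 1" using nonunit_add[OF U, of "1 - s*r" "s*r"] by auto
    then obtain i where "1 = (1 - s * r) * i" by (rule dvdE)
    then have "a = i * ((1 - s * r) * a)" by (metis mult.assoc mult.commute mult_1_left)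
    then show False using e False by simp
  qed
  then have "r dvd 1" using unit_mult_iff by blast
  then show ?thesis using r by blast
qed

lemma orbit:
  fixes v w :: "'r::comm_ring_1^2"
  assumes U: "uniserial TYPE('r)" and v: "unimodular v" and w: "unimodular w"
    and r: "w$2 = r * v$2" and s: "v$2 = s * w$2"
  shows "\<exists>g\<in>Bg. pre g (sp w) = sp v"
proof -
  obtain u where u: "u dvd 1" "w$2 = u * v$2" using associate[OF U r s] by blast
  have main: "\<exists>A \<in> Bg. A *v v = w"
  proof (cases "v$2 dvd 1")
    case True
    then obtain i where i: "1 = v$2 * i" by (rule dvdE)
    let ?y = "(w$1 - v$1) * i"
    have "?y * v$2 = (w$1 - v$1) * (v$2 * i)" by (simp add: mult_ac)
    also have "\<dots> = w$1 - v$1" using i[symmetric] by simp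
    finally have "v$1 + ?y * v$2 = w$1" by simp
    then have "m2 1 ?y 0 u *v v = w" unfolding m2_mulv' using u(2) by (simp add: vec_eq_iff forall_2)
    moreover have "m2 1 ?y 0 u \<in> Bg" by (rule upper_Bg) (simp_all add: u)
    ultimately show ?thesis by blast
  next
    case False
    then have v1: "v$1 dvd 1" using unimodular_unit[OF U v] by blast
    have "\<not> w$2 dvd 1"
    proof
      assume "w$2 dvd 1" then have "u * v$2 dvd 1" using u(2) by simp
      then show False using False unit_mult_iff by blast
    qed
    then have w1: "w$1 dvd 1" using unimodular_unit[OF U w] by blast
    obtain i where i: "1 = v$1 * i" using v1 by (rule dvdE)
    let ?x = "w$1 * i"
    have "i dvd 1" using i by (metis dvdI mult.commute)
    then have x: "?x dvd 1" using w1 unit_mult_iff by blast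
    have "?x * v$1 = w$1 * (v$1 * i)" by (simp add: mult_ac)
    then have "?x * v$1 = w$1" using i[symmetric] by simp
    then have "m2 ?x 0 0 u *v v = w" unfolding m2_mulv' using u(2) by (simp add: vec_eq_iff forall_2)
    moreover have "m2 ?x 0 0 u \<in> Bg" by (rule upper_Bg) (simp_all add: u x)
    ultimately show ?thesis by blast
  qed
  then obtain A where A: "A \<in> Bg" "A *v v = w" by blast
  have "invertible A" using A(1) unfolding Bg_def GL2_def by simp
  then have "pre A (sp w) = sp v" using pre_sp A(2) by blast
  then show ?thesis using A(1) by blast
qed

lemma pid_eq:
  fixes I J :: "'r::comm_ring_1 set"
  assumes U: "uniserial TYPE('r)" and I: "is_ideal I" and J: "is_ideal J"
    and cons: "\<forall>K. is_ideal K \<and> I \<subseteq> K \<and> K \<subseteq> J \<longrightarrow> K = I \<or> K = J"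
    and x: "x \<in> J" "x \<notin> I" and y: "y \<in> J"
  shows "\<exists>r. y = r * x"
proof -
  have "pid x \<subseteq> I \<or> I \<subseteq> pid x" using pid_comparable[OF U I] by blast
  then have "I \<subseteq> pid x" using pid_self[of x] x(2) by blast
  moreover have "pid x \<subseteq> J" using pid_sub[OF J x(1)] .
  ultimately have "pid x = I \<or> pid x = J" using cons ideal_pid by blast
  then have "pid x = J" using pid_self[of x] x(2) by blast
  then show ?thesis using y unfolding pid_def by blast
qed

lemma divides_aux:
  fixes v w :: "'r::comm_ring_1^2"
  assumes U: "uniserial TYPE('r)" and J: "is_ideal J" and v: "unimodular v"
    and d: "det2 v w \<in> J" and nv: "v$2 \<notin> J"
  shows "\<exists>r. w$2 = r * v$2"
proof -
  obtain a b where ab: "a * v$1 + b * v$2 = 1" using v unfolding unimodular_def by blast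
  define l where "l = a * w$1 + b * w$2"
  have "w$2 - l * v$2 = w$2 * (a * v$1 + b * v$2) - l * v$2" by (simp only: ab mult_1_right)
  also have "\<dots> = a * det2 v w" unfolding l_def det2_def by (simp add: algebra_simps)
  finally have e: "w$2 - l * v$2 \<in> J" using ideal_mult[OF J d] by simp
  have "pid (v$2) \<subseteq> J \<or> J \<subseteq> pid (v$2)" using pid_comparable[OF U J] by blast
  then have "J \<subseteq> pid (v$2)" using pid_self[of "v$2"] nv by blast
  then obtain r' where "w$2 - l * v$2 = r' * v$2" using e unfolding pid_def by blast
  then have "w$2 = (l + r') * v$2" by (simp add: algebra_simps)
  then show ?thesis by blast
qed

locale piece =
  fixes I J :: "'r::{comm_ring_1,finite} set" and t :: 'r
  assumes U: "uniserial TYPE('r)" and I: "is_ideal I" and J: "is_ideal J" and IJ: "I \<subseteq> J"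
    and cons: "\<forall>K. is_ideal K \<and> I \<subseteq> K \<and> K \<subseteq> J \<longrightarrow> K = I \<or> K = J"
    and tJ: "t \<in> J" and tI: "t \<notin> I"
begin

definition "D2 = cls I L0"
definition "D1 = cls J L0 - cls I L0"
definition "n1 = card D1"
definition "n2 = card D2"
definition "L1 = sp (vec2 1 t)"

definition psi' :: "('r^2) set \<Rightarrow> int" where
  "psi' L = (if L \<in> cls I L0 then - int n1 else if L \<in> cls J L0 then int n2 else 0)"

definition psi :: "('r^2) set \<Rightarrow> 'k::field" where "psi L = of_int (psi' L)"

lemma clsIJ: "cls I L \<subseteq> cls J L" unfolding cls_def using cong2_mono[OF IJ] by blast

lemma unimod_vt: "unimodular (vec2 1 t)"
  unfolding unimodular_vec2 by (rule exI[of _ 1], rule exI[of _ 0]) simp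

lemma L1_D1: "L1 \<in> D1"
proof -
  have a: "cong2 J L0 L1" unfolding L1_def using cong2_L0[OF J unimod_vt] tJ by simp
  have b: "\<not> cong2 I L0 L1" unfolding L1_def using cong2_L0[OF I unimod_vt] tI by simp
  show ?thesis unfolding D1_def cls_def using a b by simp
qed

lemma L0_D2: "L0 \<in> D2"
  unfolding D2_def cls_def using cong2_refl[OF I L0_tits] by simp

lemma n1_pos: "n1 \<ge> 1" unfolding n1_def using L1_D1 finite_lines[of D1]
  by (metis One_nat_def Suc_leI card_gt_0_iff empty_iff)

lemma n2_pos: "n2 \<ge> 1" unfolding n2_def using L0_D2 finite_lines[of D2]
  by (metis One_nat_def Suc_leI card_gt_0_iff empty_iff)

lemma cls_same: assumes K: "is_ideal K" and "cong2 K L L'" shows "cls K L = cls K L'"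
  unfolding cls_def using cong2_trans[OF K] cong2_sym[OF K] assms(2) by blast

lemma sum_psi'_L0: "sum psi' (cls J L0) = 0"
proof -
  have split: "cls J L0 = D2 \<union> D1" "D2 \<inter> D1 = {}" unfolding D1_def D2_def using clsIJ by auto
  have "sum psi' (cls J L0) = sum psi' D2 + sum psi' D1"
    unfolding split(1) by (rule sum.union_disjoint) (use split(2) finite_lines in auto)
  also have "sum psi' D2 = (\<Sum>L\<in>D2. - int n1)" unfolding psi'_def D2_def by simp
  also have "sum psi' D1 = (\<Sum>L\<in>D1. int n2)" unfolding psi'_def D1_def by (rule sum.cong) auto
  finally show ?thesis unfolding n1_def n2_def by simp
qed

lemma psi'_out: "L \<notin> cls J L0 \<Longrightarrow> psi' L = 0"
  unfolding psi'_def using clsIJ by auto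

lemma sum_psi'_cls: assumes "L \<in> tits2" shows "sum psi' (cls J L) = 0"
proof (cases "cong2 J L0 L")
  case True then show ?thesis using cls_same[OF J True] sum_psi'_L0 by simp
next
  case False
  have "psi' L' = 0" if "L' \<in> cls J L" for L'
  proof (rule psi'_out)
    show "L' \<notin> cls J L0"
    proof
      assume "L' \<in> cls J L0"
      then have "cong2 J L0 L'" "cong2 J L L'" using that unfolding cls_def by auto
      then have "cong2 J L0 L" using cong2_trans[OF J] cong2_sym[OF J] by blast
      then show False using False by simp
    qed
  qed
  then show ?thesis by simp
qed

lemma psi'_const: assumes "cong2 I L L'" shows "psi' L = psi' L'"
proof -
  have a: "L \<in> cls I L0 \<longleftrightarrow> L' \<in> cls I L0" unfolding cls_def
    using assms cong2_trans[OF I] cong2_sym[OF I] by blast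
  have "cong2 J L L'" using cong2_mono[OF IJ assms] .
  then have b: "L \<in> cls J L0 \<longleftrightarrow> L' \<in> cls J L0" unfolding cls_def
    using cong2_trans[OF J] cong2_sym[OF J] by blast
  show ?thesis unfolding psi'_def using a b by simp
qed

lemma psi_Wp: "(psi :: _ \<Rightarrow> 'k::field) \<in> Wp I J"
proof -
  have out: "psi' L = 0" if "L \<notin> tits2" for L
    using that cls_tits psi'_out by blast
  have "sum psi' tits2 = sum psi' (cls J L0)"
    by (rule sum.mono_neutral_right) (use cls_tits psi'_out finite_lines in auto)
  then have tot: "sum psi' tits2 = 0" using sum_psi'_L0 by simp
  show ?thesis unfolding Wp_def steinberg2_iff psi_def
    using out tot psi'_const sum_psi'_cls by (simp add: of_int_sum[symmetric])
qed

lemma psi_L0: "psi L0 = - of_nat n1"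
  unfolding psi_def psi'_def using L0_D2 unfolding D2_def by simp

lemma psi_L1: "psi L1 = of_nat n2"
  unfolding psi_def psi'_def using L1_D1 unfolding D1_def by simp

lemma psi_L0_ne: "psi L0 \<noteq> (0::'k::field_char_0)"
  unfolding psi_L0 using n1_pos by simp

lemma psi_L1_ne: "psi L0 \<noteq> (psi L1 :: 'k::field_char_0)"
proof
  assume "psi L0 = (psi L1 :: 'k)"
  then have "(of_int (- int n1) :: 'k) = of_int (int n2)" unfolding psi_def psi'_def
    using L0_D2 L1_D1 unfolding D1_def D2_def by simp
  then have "- int n1 = int n2" by (simp only: of_int_eq_iff)
  then show False using n1_pos by simp
qed

lemma psi_B: assumes b: "b \<in> Bg" shows "st_act b psi = psi"
proof -
  have bi: "invertible b" and b0: "pre b L0 = L0" using b unfolding Bg_def GL2_def by auto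
  have "psi' (pre b L) = psi' L" for L
  proof -
    have "cong2 K L0 (pre b L) \<longleftrightarrow> cong2 K L0 L" if K: "is_ideal K" for K
      using cong2_pre_iff[OF K bi, of L0 L] b0 by simp
    then show ?thesis unfolding psi'_def cls_def using I J by simp
  qed
  then show ?thesis unfolding psi_def st_act_pre by (simp add: fun_eq_iff)
qed

end

context piece begin

lemma Bone:
  fixes f :: "('r^2) set \<Rightarrow> 'k::field_char_0"
  assumes f: "f \<in> Wp I J" and Bi: "\<forall>b\<in>Bg. st_act b f = f"
  shows "f = (\<lambda>L. (f L1 / of_nat n2) * psi L)"
proof -
  have fB: "f (pre b L) = f L" if "b \<in> Bg" for b L
  proof -
    have "f (pre b L) = st_act b f L" by (simp add: st_act_pre)
    also have "\<dots> = f L" using Bi that by simp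
    finally show ?thesis .
  qed
  have orb: "f (sp v) = f (sp w)" if v: "unimodular v" and w: "unimodular w"
    and r: "\<exists>r. w$2 = r * v$2" and s: "\<exists>s. v$2 = s * w$2" for v w
  proof -
    obtain r s where rs: "w$2 = r * v$2" "v$2 = s * w$2" using r s by blast
    obtain g where g: "g \<in> Bg" "pre g (sp w) = sp v" using orbit[OF U v w rs] by blast
    show ?thesis using fB[OF g(1), of "sp w"] g(2) by simp
  qed
  have fc: "f L = f L'" if "cong2 I L L'" for L L' using f that unfolding Wp_def by blast
  have fout: "f L = 0" if "L \<notin> tits2" for L using f that unfolding Wp_def steinberg2_iff by blast
  have fcls: "sum f (cls J L) = 0" if "L \<in> tits2" for L using f that unfolding Wp_def by blast
  have fD2: "f L = f L0" if "L \<in> D2" for L using fc[of L0 L] that unfolding D2_def cls_def by simp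
  have fD1: "f L = f L1" if L: "L \<in> D1" for L
  proof -
    have "L \<in> tits2" using L cls_tits unfolding D1_def by blast
    then obtain v where v: "unimodular v" "L = sp v" unfolding tits2_sp by blast
    have vJ: "v$2 \<in> J" "v$2 \<notin> I" using L cong2_L0[OF J v(1)] cong2_L0[OF I v(1)] v(2)
      unfolding D1_def cls_def by auto
    have "f (sp v) = f (sp (vec2 1 t))"
      by (rule orb[OF v(1) unimod_vt]) (use pid_eq[OF U I J cons] vJ tI tJ in auto)
    then show ?thesis unfolding L1_def v(2) .
  qed
  have fO: "f L = 0" if L: "L \<in> tits2" "L \<notin> cls J L0" for L
  proof -
    obtain v where v: "unimodular v" "L = sp v" using L(1) unfolding tits2_sp by blast
    have nv: "v$2 \<notin> J" using L(2) cong2_L0[OF J v(1)] v(2) unfolding cls_def by auto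
    have same: "f L' = f L" if L': "L' \<in> cls J L" for L'
    proof -
      have c: "cong2 J L L'" using L' unfolding cls_def by simp
      then have "L' \<in> tits2" using cong2_tits by blast
      then obtain w where w: "unimodular w" "L' = sp w" unfolding tits2_sp by blast
      have d1: "det2 v w \<in> J" using c cong2_iff[OF J v(1) w(1)] v(2) w(2) by simp
      have d2: "det2 w v \<in> J" using cong2_sym[OF J c] cong2_iff[OF J w(1) v(1)] v(2) w(2) by simp
      have nw: "w$2 \<notin> J"
      proof
        assume "w$2 \<in> J"
        then have "cong2 J L0 L'" using cong2_L0[OF J w(1)] w(2) by simp
        then have "cong2 J L0 L" using cong2_trans[OF J _ cong2_sym[OF J c]] by blast
        then show False using L(2) unfolding cls_def by simp
      qed
      have "f (sp w) = f (sp v)"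
        by (rule orb[OF w(1) v(1)]) (use divides_aux[OF U J v(1) d1 nv] divides_aux[OF U J w(1) d2 nw] in auto)
      then show ?thesis using v(2) w(2) by simp
    qed
    have "sum f (cls J L) = (\<Sum>L'\<in>cls J L. f L)" using same by simp
    then have "of_nat (card (cls J L)) * f L = 0" using fcls[OF L(1)] by simp
    moreover have "card (cls J L) \<noteq> 0"
      using cong2_refl[OF J L(1)] finite_lines[of "cls J L"] unfolding cls_def by auto
    ultimately show ?thesis by simp
  qed
  have eq: "of_nat n2 * f L0 + of_nat n1 * f L1 = 0"
  proof -
    have split: "cls J L0 = D2 \<union> D1" "D2 \<inter> D1 = {}" unfolding D1_def D2_def using clsIJ by auto
    have "sum f (cls J L0) = sum f D2 + sum f D1"
      unfolding split(1) by (rule sum.union_disjoint) (use split(2) finite_lines in auto)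
    also have "sum f D2 = (\<Sum>L\<in>D2. f L0)" using fD2 by simp
    also have "sum f D1 = (\<Sum>L\<in>D1. f L1)" using fD1 by simp
    finally show ?thesis using fcls[OF L0_tits] unfolding n1_def n2_def by simp
  qed
  have n2: "(of_nat n2 :: 'k) \<noteq> 0" using n2_pos by simp
  have e2: "of_nat n2 * f L0 = - (of_nat n1 * f L1)" using eq by (simp add: eq_neg_iff_add_eq_0)
  have "f L0 = (of_nat n2 * f L0) / of_nat n2" using n2 by simp
  then have fL0: "f L0 = - (of_nat n1 * f L1) / of_nat n2" by (simp only: e2)
  show ?thesis
  proof
    fix L
    consider "L \<notin> tits2" | "L \<in> D2" | "L \<in> D1" | "L \<in> tits2" "L \<notin> cls J L0"
      unfolding D1_def D2_def by auto
    then show "f L = f L1 / of_nat n2 * psi L"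
    proof cases
      case 1 then have "L \<notin> cls J L0" using cls_tits by blast
      then show ?thesis using fout[OF 1] psi'_out unfolding psi_def by simp
    next
      case 2 then have ps: "psi L = - (of_nat n1 :: 'k)" unfolding psi_def psi'_def D2_def by simp
      show ?thesis unfolding fD2[OF 2] fL0 ps by (simp add: divide_inverse mult_ac)
    next
      case 3 then have ps: "psi L = (of_nat n2 :: 'k)" unfolding psi_def psi'_def D1_def by simp
      show ?thesis unfolding fD1[OF 3] ps using n2 by simp
    next
      case 4 then show ?thesis using fO[OF 4] psi'_out[OF 4(2)] unfolding psi_def by simp
    qed
  qed
qed

end

lemma Bg_GL2: "b \<in> Bg \<Longrightarrow> b \<in> GL2" unfolding Bg_def by simp

lemma Bg_one: "mat 1 \<in> Bg" unfolding Bg_def using GL2_one by simp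

lemma Bg_mult: assumes "b \<in> Bg" "b' \<in> Bg" shows "b ** b' \<in> Bg"
proof -
  have "b ** b' \<in> GL2" using assms GL2_mult unfolding Bg_def by blast
  moreover have "pre (b ** b') L0 = L0" unfolding pre_comp using assms unfolding Bg_def by simp
  ultimately show ?thesis unfolding Bg_def by blast
qed

lemma Bg_inv: assumes "b \<in> Bg" shows "\<exists>h\<in>Bg. b ** h = mat 1 \<and> h ** b = mat 1"
proof -
  obtain h where h: "h \<in> GL2" "b ** h = mat 1" "h ** b = mat 1" using GL2_inv assms Bg_GL2 by blast
  have "pre h L0 = pre h (pre b L0)" using assms unfolding Bg_def by simp
  also have "\<dots> = L0" using pre_inv[OF h(2)] by simp
  finally show ?thesis using h unfolding Bg_def by blast
qed

lemma bij_left_mult: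
  assumes closed: "\<And>x y. x \<in> S \<Longrightarrow> y \<in> S \<Longrightarrow> x ** y \<in> S"
    and inv: "\<And>x. x \<in> S \<Longrightarrow> \<exists>h\<in>S. x ** h = mat 1 \<and> h ** x = mat 1"
    and g: "g \<in> S"
  shows "bij_betw (\<lambda>x. g ** x) S (S :: ('r::comm_ring_1^2^2) set)"
proof -
  obtain h where h: "h \<in> S" "g ** h = mat 1" "h ** g = mat 1" using inv g by blast
  show ?thesis
  proof (rule bij_betw_byWitness[where f'="\<lambda>x. h ** x"])
    show "\<forall>a\<in>S. h ** (g ** a) = a" using h(3) by (simp add: matrix_mul_assoc)
    show "\<forall>a\<in>S. g ** (h ** a) = a" using h(2) by (simp add: matrix_mul_assoc)
    show "(**) g ` S \<subseteq> S" using closed g by blast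
    show "(**) h ` S \<subseteq> S" using closed h(1) by blast
  qed
qed

lemma bij_Bg: "b \<in> Bg \<Longrightarrow> bij_betw (\<lambda>x. b ** x) Bg Bg"
  by (rule bij_left_mult) (auto intro: Bg_mult Bg_inv)

lemma bij_GL2: "g \<in> GL2 \<Longrightarrow> bij_betw (\<lambda>x. g ** x) GL2 GL2"
  by (rule bij_left_mult) (auto intro: GL2_mult GL2_inv)

lemma finite_mats: "finite (S :: ('r::finite^2^2) set)"
  by (rule finite_subset[of _ UNIV]) auto

lemma GL2_trans: assumes "L \<in> tits2" shows "\<exists>g\<in>GL2. pre g L0 = L"
proof -
  obtain v where v: "unimodular v" "L = sp v" using assms unfolding tits2_sp by blast
  obtain r s where rs: "r * v$1 + s * v$2 = 1" using v(1) unfolding unimodular_def by blast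
  let ?A = "m2 r s (-(v$2)) (v$1)" and ?H = "m2 (v$1) (-s) (v$2) r"
  have AH: "?A ** ?H = mat 1" unfolding mat1_m2 m2_mult using rs by (simp add: algebra_simps)
  have HA: "?H ** ?A = mat 1" unfolding mat1_m2 m2_mult using rs by (simp add: algebra_simps)
  have inv: "invertible ?A" using invertible_inv[OF HA AH] .
  have "?A *v v = e1" unfolding e1_def m2_mulv' using rs by (simp add: algebra_simps)
  then have "pre ?A L0 = L" unfolding L0_def v(2) by (rule pre_sp[OF inv])
  then show ?thesis using inv unfolding GL2_def by blast
qed

lemma ip_sum_left:
  "ip (\<lambda>L. \<Sum>g\<in>S. a g * phi g L) f = (\<Sum>g\<in>S. a g * ip (phi g) f)"
proof -
  have "ip (\<lambda>L. \<Sum>g\<in>S. a g * phi g L) f = (\<Sum>L\<in>tits2. \<Sum>g\<in>S. a g * (phi g L * f L))"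
    unfolding ip_def by (simp add: sum_distrib_right mult.assoc)
  also have "\<dots> = (\<Sum>g\<in>S. \<Sum>L\<in>tits2. a g * (phi g L * f L))" by (rule sum.swap)
  also have "\<dots> = (\<Sum>g\<in>S. a g * ip (phi g) f)" unfolding ip_def by (simp add: sum_distrib_left)
  finally show ?thesis .
qed

lemma ip_sym: "ip f h = ip h f" unfolding ip_def by (simp add: mult.commute)

lemma ip_add: "ip (\<lambda>L. a L + b L) f = ip a f + ip b f"
  unfolding ip_def by (simp add: distrib_right sum.distrib)
lemma ip_diff: "ip (\<lambda>L. a L - b L) f = ip a f - ip b f"
  unfolding ip_def by (simp add: left_diff_distrib sum_subtractf)
lemma ip_scale: "ip (\<lambda>L. c * a L) f = c * ip a f"
  unfolding ip_def by (simp add: sum_distrib_left mult.assoc)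
lemma ip_scale_r: "ip a (\<lambda>L. c * b L) = c * ip a b"
  unfolding ip_def by (simp add: sum_distrib_left mult_ac)
lemma ip_zero: "ip (\<lambda>_. 0) f = 0" unfolding ip_def by simp

context piece begin

lemma contains_psi:
  fixes U :: "(('r^2) set \<Rightarrow> 'k::field_char_0) set"
  assumes U: "fsubspace U" "invariant GL2 st_act U" "U \<subseteq> Wp I J" "U \<noteq> {\<lambda>_. 0}"
  shows "psi \<in> U"
proof -
  have "(\<lambda>_. 0) \<in> U" using fsubspace_zero[OF U(1)] .
  then obtain u where u: "u \<in> U" "u \<noteq> (\<lambda>_. 0)" using U(4) by blast
  then obtain L where uL: "u L \<noteq> 0" by (meson ext)
  have "u \<in> steinberg2" using u(1) U(3) unfolding Wp_def by blast
  then have "L \<in> tits2" using uL unfolding steinberg2_iff by blast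
  then obtain g where g: "g \<in> GL2" "pre g L0 = L" using GL2_trans by blast
  define h where "h = st_act g u"
  have hU: "h \<in> U" using U(2) g(1) u(1) unfolding invariant_def h_def by blast
  have hL0: "h L0 \<noteq> 0" unfolding h_def st_act_pre g(2) using uL .
  define avg where "avg = (\<lambda>L. \<Sum>b\<in>Bg. st_act b h L)"
  have avgU: "avg \<in> U" unfolding avg_def
    by (rule fsubspace_sum[OF U(1) finite_mats]) (use U(2) hU Bg_GL2 in \<open>auto simp: invariant_def\<close>)
  have avgB: "\<forall>b\<in>Bg. st_act b avg = avg"
  proof
    fix b :: "'r^2^2" assume b: "b \<in> Bg"
    show "st_act b avg = avg"
    proof
      fix L
      have "st_act b avg L = (\<Sum>b'\<in>Bg. st_act (b ** b') h L)"
        unfolding avg_def st_act_pre[of b] by (simp add: st_act_comp[symmetric] st_act_pre)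
      also have "\<dots> = avg L" unfolding avg_def
        using sum.reindex_bij_betw[OF bij_Bg[OF b], of "\<lambda>x. st_act x h L"] by simp
      finally show "st_act b avg L = avg L" .
    qed
  qed
  have "avg L0 = (\<Sum>b\<in>(Bg::('r^2^2) set). h L0)" unfolding avg_def st_act_pre
    by (rule sum.cong) (auto simp: Bg_def)
  also have "\<dots> = of_nat (card (Bg::('r^2^2) set)) * h L0" by simp
  finally have avgL0: "avg L0 \<noteq> 0"
    using hL0 Bg_one[where 'a='r] finite_mats[of "Bg::('r^2^2) set"] by (simp add: card_gt_0_iff) blast
  have avgW: "avg \<in> Wp I J" using avgU U(3) by blast
  have avgeq: "avg = (\<lambda>L. (avg L1 / of_nat n2) * psi L)" using Bone[OF avgW avgB] .
  define c where "c = avg L1 / of_nat n2"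
  have c: "c \<noteq> 0" using avgL0 avgeq unfolding c_def by (metis mult_zero_left)
  have "(\<lambda>L. (1 / c) * avg L) \<in> U" using fsubspace_scale[OF U(1) avgU] .
  moreover have "(\<lambda>L. (1 / c) * avg L) = psi"
    using c by (subst avgeq) (simp add: c_def[symmetric])
  ultimately show ?thesis by simp
qed

definition Pop :: "(('r^2) set \<Rightarrow> 'k::field_char_0) \<Rightarrow> (('r^2) set \<Rightarrow> 'k)" where
  "Pop h = (\<lambda>L. \<Sum>g\<in>GL2. ip h (st_act g psi) * st_act g psi L)"

lemma Pop_in:
  fixes U :: "(('r^2) set \<Rightarrow> 'k::field_char_0) set"
  assumes U: "fsubspace U" "invariant GL2 st_act U" and p: "psi \<in> U"
  shows "Pop h \<in> U"
  unfolding Pop_def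
  by (rule fsubspace_sum[OF U(1) finite_mats])
     (use U p in \<open>auto simp: invariant_def intro!: fsubspace_scale[OF U(1)]\<close>)

lemma Pop_equiv:
  assumes g': "g' \<in> GL2"
  shows "st_act g' (Pop h) = Pop (st_act g' h)"
proof
  fix L
  have "st_act g' (Pop h) L = (\<Sum>g\<in>GL2. ip h (st_act g psi) * st_act (g' ** g) psi L)"
    unfolding Pop_def st_act_pre[of g'] by (simp add: st_act_comp[symmetric] st_act_pre)
  also have "\<dots> = (\<Sum>g\<in>GL2. ip (st_act g' h) (st_act (g' ** g) psi) * st_act (g' ** g) psi L)"
    by (rule sum.cong) (simp_all add: st_act_comp[symmetric] ip_pre[OF g'])
  also have "\<dots> = Pop (st_act g' h) L" unfolding Pop_def
    using sum.reindex_bij_betw[OF bij_GL2[OF g'], of "\<lambda>x. ip (st_act g' h) (st_act x psi) * st_act x psi L"]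
    by simp
  finally show "st_act g' (Pop h) L = Pop (st_act g' h) L" .
qed

lemma Pop_sym: "ip (Pop h) f = ip h (Pop f)"
proof -
  have "ip (Pop h) f = (\<Sum>g\<in>GL2. ip h (st_act g psi) * ip (st_act g psi) f)"
    unfolding Pop_def by (rule ip_sum_left)
  moreover have "ip (Pop f) h = (\<Sum>g\<in>GL2. ip f (st_act g psi) * ip (st_act g psi) h)"
    unfolding Pop_def by (rule ip_sum_left)
  moreover have "(\<Sum>g\<in>GL2. ip f (st_act g psi) * ip (st_act g psi) h)
     = (\<Sum>g\<in>GL2. ip h (st_act g psi) * ip (st_act g psi) f)"
    by (rule sum.cong) (simp_all add: ip_sym[of f] ip_sym[of _ h] mult.commute)
  ultimately show ?thesis using ip_sym[of h "Pop f"] by simp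
qed

lemma Pop_add: "Pop (\<lambda>L. a L + b L) = (\<lambda>L. Pop a L + Pop b L)"
  unfolding Pop_def ip_add by (simp add: distrib_right sum.distrib)
lemma Pop_scale: "Pop (\<lambda>L. c * a L) = (\<lambda>L. c * Pop a L)"
  unfolding Pop_def ip_scale by (simp add: sum_distrib_left mult.assoc)
lemma Pop_zero: "Pop (\<lambda>_. 0) = (\<lambda>_. 0)"
  unfolding Pop_def ip_zero by simp

end

context piece begin

definition zz :: "'r^2^2 \<Rightarrow> int" where "zz g = (\<Sum>L\<in>tits2. psi' L * psi' (pre g L))"

lemma ip_psi_int: "ip psi (st_act g psi) = (of_int (zz g) :: 'k::field_char_0)"
  unfolding ip_def zz_def psi_def st_act_pre by simp

lemma zz_one: "zz (mat 1) > 0"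
proof -
  have "psi' L0 * psi' L0 \<le> (\<Sum>L\<in>tits2. psi' L * psi' L)"
    by (rule member_le_sum) (simp_all add: L0_tits finite_lines)
  moreover have "psi' L0 * psi' L0 > 0" unfolding psi'_def using L0_D2 n1_pos unfolding D2_def by simp
  ultimately show ?thesis unfolding zz_def by simp
qed

lemma ip_psi_ne: "ip psi psi \<noteq> (0::'k::field_char_0)"
  using ip_psi_int[of "mat 1"] zz_one unfolding st_act_id by (metis of_int_eq_0_iff less_irrefl)

lemma Wp_inv: "invariant GL2 st_act (Wp I J)"
  unfolding invariant_def using Wp_invariant[OF I J] by blast

definition cc :: "'k::field_char_0" where "cc = Pop psi L1 / of_nat n2"

lemma Pop_psi: "Pop psi = (\<lambda>L. (cc::'k::field_char_0) * psi L)"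
proof -
  have W: "Pop psi \<in> (Wp I J :: (_ \<Rightarrow> 'k) set)"
    by (rule Pop_in[OF Wp_fsubspace Wp_inv psi_Wp])
  have B: "\<forall>b\<in>Bg. st_act b (Pop psi) = (Pop psi :: _ \<Rightarrow> 'k)"
    using Pop_equiv Bg_GL2 psi_B by metis
  show ?thesis using Bone[OF W B] unfolding cc_def .
qed

lemma cc_ne: "(cc::'k::field_char_0) \<noteq> 0"
proof
  assume c0: "(cc::'k) = 0"
  have "ip (Pop psi) psi = (\<Sum>g\<in>GL2. ip psi (st_act g psi) * ip (st_act g psi) psi :: 'k)"
    unfolding Pop_def by (rule ip_sum_left)
  also have "\<dots> = (\<Sum>g\<in>GL2. of_int (zz g * zz g))"
    by (rule sum.cong) (simp_all add: ip_sym[of _ psi] ip_psi_int)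
  also have "\<dots> = of_int (\<Sum>g\<in>GL2. zz g * zz g)" by simp
  finally have e: "ip (Pop psi) psi = (of_int (\<Sum>g\<in>GL2. zz g * zz g) :: 'k)" .
  have "zz (mat 1) * zz (mat 1) \<le> (\<Sum>g\<in>GL2. zz g * zz g)"
    by (rule member_le_sum) (simp_all add: GL2_one finite_mats)
  moreover have "zz (mat 1) * zz (mat 1) > 0" using zz_one by simp
  ultimately have pos: "(\<Sum>g\<in>GL2. zz g * zz g) \<noteq> 0" by linarith
  have h0: "ip (Pop psi) psi = (0::'k)" unfolding Pop_psi c0 by (simp add: ip_def)
  have "(of_int (\<Sum>g\<in>GL2. zz g * zz g) :: 'k) = 0" using e h0 by metis
  then show False using pos by (simp only: of_int_eq_0_iff)
qed

lemma Pop_eq: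
  assumes h: "h \<in> Wp I J"
  shows "Pop h = (\<lambda>L. (cc::'k::field_char_0) * h L)"
proof -
  define Q where "Q = {(\<lambda>L. Pop h L - cc * h L) | h :: _ \<Rightarrow> 'k. h \<in> Wp I J}"
  have Wsub: "fsubspace (Wp I J :: (_ \<Rightarrow> 'k) set)" by (rule Wp_fsubspace)
  have PW: "Pop h \<in> Wp I J" for h :: "_ \<Rightarrow> 'k" by (rule Pop_in[OF Wp_fsubspace Wp_inv psi_Wp])
  have QW: "Q \<subseteq> Wp I J"
  proof
    fix q assume "q \<in> Q"
    then obtain h where h: "h \<in> Wp I J" "q = (\<lambda>L. Pop h L - cc * h L)" unfolding Q_def by blast
    show "q \<in> Wp I J" unfolding h(2)
      by (rule fsubspace_diff[OF Wsub PW fsubspace_scale[OF Wsub h(1)]])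
  qed
  have Qsub: "fsubspace Q" unfolding fsubspace_def
  proof (intro conjI ballI allI)
    show "(\<lambda>_. 0) \<in> Q" unfolding Q_def
      using fsubspace_zero[OF Wsub] by (intro CollectI exI[of _ "\<lambda>_. 0"]) (simp add: Pop_zero)
  next
    fix x y assume "x \<in> Q" "y \<in> Q"
    then obtain h1 h2 where h: "h1 \<in> Wp I J" "x = (\<lambda>L. Pop h1 L - cc * h1 L)"
      "h2 \<in> Wp I J" "y = (\<lambda>L. Pop h2 L - cc * h2 L)" unfolding Q_def by blast
    have "(\<lambda>a. h1 a + h2 a) \<in> Wp I J" using fsubspace_add[OF Wsub h(1,3)] .
    moreover have "(\<lambda>a. x a + y a) = (\<lambda>L. Pop (\<lambda>a. h1 a + h2 a) L - cc * (h1 L + h2 L))"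
      unfolding h(2,4) Pop_add by (simp add: algebra_simps)
    ultimately show "(\<lambda>a. x a + y a) \<in> Q" unfolding Q_def by blast
  next
    fix c :: 'k and x assume "x \<in> Q"
    then obtain h1 where h: "h1 \<in> Wp I J" "x = (\<lambda>L. Pop h1 L - cc * h1 L)" unfolding Q_def by blast
    have "(\<lambda>a. c * h1 a) \<in> Wp I J" using fsubspace_scale[OF Wsub h(1)] .
    moreover have "(\<lambda>a. c * x a) = (\<lambda>L. Pop (\<lambda>a. c * h1 a) L - cc * (c * h1 L))"
      unfolding h(2) Pop_scale by (simp add: algebra_simps)
    ultimately show "(\<lambda>a. c * x a) \<in> Q" unfolding Q_def by blast
  qed
  have Qinv: "invariant GL2 st_act Q" unfolding invariant_def
  proof (intro ballI)
    fix g :: "'r^2^2" and q assume g: "g \<in> GL2" and "q \<in> Q"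
    then obtain h1 where h: "h1 \<in> Wp I J" "q = (\<lambda>L. Pop h1 L - cc * h1 L)" unfolding Q_def by blast
    have "st_act g h1 \<in> Wp I J" using Wp_invariant[OF I J g h(1)] .
    moreover have "st_act g q = (\<lambda>L. Pop (st_act g h1) L - cc * st_act g h1 L)"
      unfolding h(2) Pop_equiv[OF g, symmetric] by (simp add: st_act_pre fun_eq_iff)
    ultimately show "st_act g q \<in> Q" unfolding Q_def by blast
  qed
  have Q0: "Q = {\<lambda>_. 0}"
  proof (rule ccontr)
    assume "Q \<noteq> {\<lambda>_. 0}"
    then have "psi \<in> Q" using contains_psi[OF Qsub Qinv QW] by blast
    then obtain h1 :: "('r^2) set \<Rightarrow> 'k" where h: "h1 \<in> Wp I J" "psi = (\<lambda>L. Pop h1 L - cc * h1 L)"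
      unfolding Q_def by blast
    have "ip psi psi = ip (Pop h1) psi - cc * ip h1 psi"
      by (subst (1) h(2)) (simp add: ip_diff ip_scale)
    also have "ip (Pop h1) psi = ip h1 (Pop psi)" by (rule Pop_sym)
    also have "\<dots> = cc * ip h1 psi" unfolding Pop_psi by (rule ip_scale_r)
    finally have "ip psi psi = (0::'k)" by simp
    then show False using ip_psi_ne[where 'k='k] by simp
  qed
  have "(\<lambda>L. Pop h L - cc * h L) \<in> Q" unfolding Q_def using h by blast
  then have "(\<lambda>L. Pop h L - cc * h L) = (\<lambda>_. 0)" using Q0 by blast
  then show ?thesis by (simp add: fun_eq_iff)
qed

lemma irreducible: "irreducible_rep GL2 st_act (Wp I J :: (_ \<Rightarrow> 'k::field_char_0) set)"
  unfolding irreducible_rep_def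
proof (intro conjI allI impI)
  show "fsubspace (Wp I J :: (_ \<Rightarrow> 'k) set)" by (rule Wp_fsubspace)
  show "invariant GL2 st_act (Wp I J :: (_ \<Rightarrow> 'k) set)" by (rule Wp_inv)
  show "Wp I J \<noteq> {\<lambda>_. 0 :: 'k}"
  proof
    assume "Wp I J = {\<lambda>_. 0 :: 'k}"
    then have "psi = (\<lambda>_. 0 :: 'k)" using psi_Wp by blast
    then show False using psi_L0_ne by (metis)
  qed
next
  fix U :: "(_ \<Rightarrow> 'k) set"
  assume U: "fsubspace U \<and> invariant GL2 st_act U \<and> U \<subseteq> Wp I J"
  show "U = {\<lambda>_. 0} \<or> U = Wp I J"
  proof (cases "U = {\<lambda>_. 0}")
    case True then show ?thesis by blast
  next
    case False
    then have p: "psi \<in> U" using contains_psi U by blast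
    have "w \<in> U" if w: "w \<in> Wp I J" for w
    proof -
      have "(\<lambda>L. (1/cc) * Pop w L) \<in> U" using fsubspace_scale[OF _ Pop_in[OF _ _ p]] U by blast
      moreover have "(\<lambda>L. (1/cc) * Pop w L) = w" unfolding Pop_eq[OF w] by (simp add: cc_ne)
      ultimately show ?thesis by simp
    qed
    then have "U = Wp I J" using U by blast
    then show ?thesis by blast
  qed
qed

end

definition Eop :: "'r::{comm_ring_1,finite} set \<Rightarrow> (('r^2) set \<Rightarrow> 'k::field) \<Rightarrow> (('r^2) set \<Rightarrow> 'k)" where
  "Eop I f L = (if L \<in> tits2 then sum f (cls I L) / of_nat (card (cls I L)) else 0)"

lemma card_cls_ne: "is_ideal I \<Longrightarrow> L \<in> tits2 \<Longrightarrow> card (cls (I::'r::{comm_ring_1,finite} set) L) \<noteq> 0"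
  using cong2_refl[of I L] finite_lines[of "cls I L"] unfolding cls_def by auto

lemma cls_same': assumes K: "is_ideal K" and "cong2 K L L'" shows "cls K L = cls K L'"
  unfolding cls_def using cong2_trans[OF K] cong2_sym[OF K] assms(2) by blast

lemma E_const: "is_ideal I \<Longrightarrow> cong2 I L L' \<Longrightarrow> Eop I f L = Eop I f L'"
  unfolding Eop_def using cls_same'[of I L L'] cong2_tits[of I L L'] by simp

lemma E_sum:
  fixes f :: "('r::{comm_ring_1,finite}^2) set \<Rightarrow> 'k::field_char_0"
  assumes I: "is_ideal I" and C: "C \<subseteq> tits2" and cl: "\<forall>L\<in>C. \<forall>L'. cong2 I L L' \<longrightarrow> L' \<in> C"
  shows "sum (Eop I f) C = sum f C"
proof -
  define n where "n L = (of_nat (card (cls I L)) :: 'k)" for L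
  have n0: "n L \<noteq> 0" if "L \<in> C" for L using card_cls_ne[OF I] that C unfolding n_def by auto
  have clsC: "cls I L = {L'\<in>C. cong2 I L L'}" if "L \<in> C" for L
    using that cl unfolding cls_def by blast
  have A: "Eop I f L = (\<Sum>L'\<in>C. if cong2 I L L' then f L' / n L' else 0)" if L: "L \<in> C" for L
  proof -
    have "Eop I f L = sum f (cls I L) / n L" unfolding Eop_def n_def using L C by auto
    also have "\<dots> = (\<Sum>L'\<in>cls I L. f L' / n L')"
      unfolding sum_divide_distrib
    proof (rule sum.cong)
      fix x assume "x \<in> cls I L"
      then have "cls I L = cls I x" using cls_same'[OF I] unfolding cls_def by simp
      then show "f x / n L = f x / n x" unfolding n_def by simp
    qed simp
    also have "\<dots> = (\<Sum>L'\<in>C. if cong2 I L L' then f L' / n L' else 0)"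
      unfolding clsC[OF L] by (rule sum.inter_filter) (rule finite_lines)
    finally show ?thesis .
  qed
  have "sum (Eop I f) C = (\<Sum>L\<in>C. \<Sum>L'\<in>C. if cong2 I L L' then f L' / n L' else 0)"
    using A by simp
  also have "\<dots> = (\<Sum>L'\<in>C. \<Sum>L\<in>C. if cong2 I L L' then f L' / n L' else 0)" by (rule sum.swap)
  also have "\<dots> = sum f C"
  proof (rule sum.cong)
    fix L' assume L': "L' \<in> C"
    have set: "{L\<in>C. cong2 I L L'} = cls I L'"
      unfolding clsC[OF L'] using cong2_sym[OF I] by blast
    have "(\<Sum>L\<in>C. if cong2 I L L' then f L' / n L' else 0) = (\<Sum>L\<in>{L\<in>C. cong2 I L L'}. f L' / n L')"
      by (rule sum.inter_filter[symmetric]) (rule finite_lines)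
    also have "\<dots> = n L' * (f L' / n L')" unfolding set n_def by simp
    also have "\<dots> = f L'" using n0[OF L'] by simp
    finally show "(\<Sum>L\<in>C. if cong2 I L L' then f L' / n L' else 0) = f L'" .
  qed simp
  finally show ?thesis .
qed

lemma E_zero:
  fixes f :: "('r::{comm_ring_1,finite}^2) set \<Rightarrow> 'k::field_char_0"
  assumes f: "f \<in> steinberg2" shows "Eop UNIV f = (\<lambda>_. 0)"
proof
  fix L :: "('r^2) set"
  have "cls UNIV L = tits2" if "L \<in> tits2" unfolding cls_def using that cong2_UNIV cong2_tits by blast
  then show "Eop UNIV f L = 0" unfolding Eop_def using f unfolding steinberg2_iff by simp
qed

lemma E_id:
  fixes f :: "('r::{comm_ring_1,finite}^2) set \<Rightarrow> 'k::field_char_0"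
  assumes f: "\<forall>L. L \<notin> tits2 \<longrightarrow> f L = 0" shows "Eop {0} f = f"
proof
  fix L :: "('r^2) set"
  have "cls {0} L = {L}" if "L \<in> tits2" unfolding cls_def
    using that cong2_zero cong2_refl[OF ideal_0] by blast
  then show "Eop {0} f L = f L" unfolding Eop_def using f by simp
qed

lemma E_lin: "Eop I (\<lambda>a. \<Sum>i\<in>S. d i a) L = (\<Sum>i\<in>S. Eop I (d i) L)"
proof (cases "L \<in> tits2")
  case True
  have "(\<Sum>a\<in>cls I L. \<Sum>i\<in>S. d i a) = (\<Sum>i\<in>S. \<Sum>a\<in>cls I L. d i a)" by (rule sum.swap)
  then show ?thesis unfolding Eop_def using True by (simp add: sum_divide_distrib)
qed (simp add: Eop_def)

lemma E_diff_lin: "Eop I (\<lambda>a. x a - y a) L = Eop I x L - Eop I y L"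
  unfolding Eop_def by (simp add: sum_subtractf diff_divide_distrib)

lemma E_fine:
  fixes w :: "('r::{comm_ring_1,finite}^2) set \<Rightarrow> 'k::field_char_0"
  assumes w: "w \<in> Wp I J" and I': "is_ideal I'" and sub: "I' \<subseteq> I"
  shows "Eop I' w = w"
proof
  fix L :: "('r^2) set"
  show "Eop I' w L = w L"
  proof (cases "L \<in> tits2")
    case True
    have "\<forall>L'\<in>cls I' L. w L' = w L" using w cong2_mono[OF sub] unfolding Wp_def cls_def by force
    then have "sum w (cls I' L) = of_nat (card (cls I' L)) * w L" by simp
    then show ?thesis unfolding Eop_def using True card_cls_ne[OF I' True] by simp
  next
    case False then show ?thesis using w unfolding Eop_def Wp_def steinberg2_iff by simp
  qed
qed

lemma E_coarse:
  fixes w :: "('r::{comm_ring_1,finite}^2) set \<Rightarrow> 'k::field_char_0"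
  assumes w: "w \<in> Wp I J" and J: "is_ideal J" and J': "is_ideal J'" and sub: "J \<subseteq> J'"
  shows "Eop J' w = (\<lambda>_. 0)"
proof
  fix L :: "('r^2) set"
  show "Eop J' w L = 0"
  proof (cases "L \<in> tits2")
    case True
    have EJ: "Eop J w = (\<lambda>_. 0)"
    proof
      fix L :: "('r^2) set" show "Eop J w L = 0" unfolding Eop_def using w unfolding Wp_def by simp
    qed
    have "sum w (cls J' L) = sum (Eop J w) (cls J' L)"
    proof (rule E_sum[symmetric, OF J cls_tits])
      show "\<forall>L1\<in>cls J' L. \<forall>L2. cong2 J L1 L2 \<longrightarrow> L2 \<in> cls J' L"
        unfolding cls_def using cong2_mono[OF sub] cong2_trans[OF J'] by blast
    qed
    also have "\<dots> = 0" unfolding EJ by simp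
    finally show ?thesis unfolding Eop_def by simp
  next
    case False then show ?thesis unfolding Eop_def by simp
  qed
qed

lemma E_diff_W:
  fixes f :: "('r::{comm_ring_1,finite}^2) set \<Rightarrow> 'k::field_char_0"
  assumes f: "f \<in> steinberg2" and I: "is_ideal I" and J: "is_ideal J" and IJ: "I \<subseteq> J"
  shows "(\<lambda>L. Eop I f L - Eop J f L) \<in> Wp I J"
proof -
  have clT: "\<forall>L\<in>tits2. \<forall>L'. cong2 K L L' \<longrightarrow> L' \<in> tits2" for K :: "'r set" using cong2_tits by blast
  have s1: "sum (Eop I f) tits2 = sum f tits2" by (rule E_sum[OF I subset_refl clT])
  have s2: "sum (Eop J f) tits2 = sum f tits2" by (rule E_sum[OF J subset_refl clT])
  have st: "(\<lambda>L. Eop I f L - Eop J f L) \<in> steinberg2"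
    unfolding steinberg2_iff using s1 s2 by (simp add: sum_subtractf Eop_def)
  have co: "\<forall>L L'. cong2 I L L' \<longrightarrow> Eop I f L - Eop J f L = Eop I f L' - Eop J f L'"
    using E_const[OF I] E_const[OF J] cong2_mono[OF IJ] by metis
  have cs: "\<forall>L\<in>tits2. (\<Sum>L'\<in>cls J L. Eop I f L' - Eop J f L') = 0"
  proof
    fix L :: "('r^2) set" assume L: "L \<in> tits2"
    have clJ: "\<forall>L1\<in>cls J L. \<forall>L2. cong2 J L1 L2 \<longrightarrow> L2 \<in> cls J L"
      unfolding cls_def using cong2_trans[OF J] by blast
    have clI: "\<forall>L1\<in>cls J L. \<forall>L2. cong2 I L1 L2 \<longrightarrow> L2 \<in> cls J L"
      using clJ cong2_mono[OF IJ] by blast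
    show "(\<Sum>L'\<in>cls J L. Eop I f L' - Eop J f L') = 0"
      unfolding sum_subtractf E_sum[OF I cls_tits clI] E_sum[OF J cls_tits clJ] by simp
  qed
  show ?thesis unfolding Wp_def using st co cs by simp
qed

lemma E_zero_fun: "Eop I (\<lambda>_. 0) L = 0" unfolding Eop_def by simp

lemma dsum:
  fixes c :: "nat \<Rightarrow> 'r::{comm_ring_1,finite} set"
  assumes ideal: "\<forall>i\<le>k. is_ideal (c i)" and mono: "\<forall>i j. i \<le> j \<and> j \<le> k \<longrightarrow> c i \<subseteq> c j"
    and c0: "c 0 = {0}" and ck: "c k = UNIV"
  shows "direct_sum (steinberg2 :: (('r^2) set \<Rightarrow> 'k::field_char_0) set) k (\<lambda>i. Wp (c i) (c (Suc i)))"
  unfolding direct_sum_def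
proof (intro conjI allI impI ballI)
  fix i assume "i < k" then show "Wp (c i) (c (Suc i)) \<subseteq> (steinberg2 :: (_ \<Rightarrow> 'k) set)"
    unfolding Wp_def by blast
next
  fix f :: "('r^2) set \<Rightarrow> 'k" assume f: "f \<in> steinberg2"
  define P where "P ws \<longleftrightarrow> (\<forall>i. (i < k \<longrightarrow> ws i \<in> Wp (c i) (c (Suc i))) \<and> (k \<le> i \<longrightarrow> ws i = (\<lambda>_. 0)))
       \<and> f = (\<lambda>a. \<Sum>i<k. ws i a)" for ws
  define a where "a i = (if i < k then (\<lambda>L. Eop (c i) f L - Eop (c (Suc i)) f L) else (\<lambda>_. 0))" for i
  have Pa: "P a" unfolding P_def
  proof (intro conjI allI impI)
    fix i assume i: "i < k"
    show "a i \<in> Wp (c i) (c (Suc i))" unfolding a_def using i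
      by (simp add: E_diff_W[OF f] ideal mono)
  next
    fix i assume "k \<le> i" then show "a i = (\<lambda>_. 0)" unfolding a_def by simp
  next
    show "f = (\<lambda>L. \<Sum>i<k. a i L)"
    proof
      fix L
      have "(\<Sum>i<k. a i L) = (\<Sum>i<k. Eop (c i) f L - Eop (c (Suc i)) f L)"
        unfolding a_def by (rule sum.cong) simp_all
      also have "\<dots> = Eop (c 0) f L - Eop (c k) f L" by (rule sum_lessThan_telescope')
      also have "\<dots> = f L" unfolding c0 ck E_zero[OF f] E_id[OF f[unfolded steinberg2_iff, THEN conjunct1]] by simp
      finally show "f L = (\<Sum>i<k. a i L)" by simp
    qed
  qed
  have uniq: "ws = a" if Pw: "P ws" for ws
  proof
    fix i
    show "ws i = a i"
    proof (cases "i < k")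
      case False then show ?thesis using Pw Pa unfolding P_def by simp
    next
      case ik: True
      define d where "d j = (\<lambda>L. ws j L - a j L)" for j
      have dW: "d j \<in> Wp (c j) (c (Suc j))" if "j < k" for j
        unfolding d_def using Pw Pa that unfolding P_def by (intro fsubspace_diff[OF Wp_fsubspace]) auto
      have sum0: "(\<lambda>L. \<Sum>j<k. d j L) = (\<lambda>_. 0)"
      proof
        fix L
        have "f L = (\<Sum>j<k. ws j L)" "f L = (\<Sum>j<k. a j L)" using Pw Pa unfolding P_def by (metis)+
        then show "(\<Sum>j<k. d j L) = 0" unfolding d_def by (simp add: sum_subtractf)
      qed
      have fine: "Eop (c m) (d j) = d j" if "j < k" "m \<le> j" for m j
        using E_fine[OF dW[OF that(1)]] ideal mono that by simp
      have coarse: "Eop (c m) (d j) = (\<lambda>_. 0)" if "j < k" "Suc j \<le> m" "m \<le> k" for m j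
        using E_coarse[OF dW[OF that(1)]] ideal mono that by simp
      show ?thesis
      proof
        fix L
        have "0 = Eop (c i) (\<lambda>a. \<Sum>j<k. d j a) L - Eop (c (Suc i)) (\<lambda>a. \<Sum>j<k. d j a) L"
          unfolding sum0 E_zero_fun by simp
        also have "\<dots> = (\<Sum>j<k. Eop (c i) (d j) L - Eop (c (Suc i)) (d j) L)"
          unfolding E_lin sum_subtractf ..
        also have "\<dots> = (\<Sum>j<k. if j = i then d i L else 0)"
        proof (rule sum.cong)
          fix j assume j: "j \<in> {..<k}"
          consider "j = i" | "i < j" | "j < i" by linarith
          then show "Eop (c i) (d j) L - Eop (c (Suc i)) (d j) L = (if j = i then d i L else 0)"
          proof cases
            case 1 then show ?thesis using fine[of i i] coarse[of i "Suc i"] ik by simp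
          next
            case 2 then show ?thesis using fine[of j i] fine[of j "Suc i"] j by simp
          next
            case 3 then show ?thesis using coarse[of j i] coarse[of j "Suc i"] j ik by simp
          qed
        qed simp
        also have "\<dots> = d i L" using ik by simp
        finally show "ws i L = a i L" unfolding d_def by simp
      qed
    qed
  qed
  show "\<exists>!ws. (\<forall>i. (i < k \<longrightarrow> ws i \<in> Wp (c i) (c (Suc i))) \<and> (k \<le> i \<longrightarrow> ws i = (\<lambda>_. 0)))
       \<and> f = (\<lambda>a. \<Sum>i<k. ws i a)"
    using Pa uniq unfolding P_def by blast
qed

definition g0 :: "'r::comm_ring_1 \<Rightarrow> 'r^2^2" where "g0 t = m2 1 0 t 1"

lemma g0_GL2: "g0 t \<in> GL2"
proof -
  have "g0 t ** m2 1 0 (-t) 1 = mat 1" "m2 1 0 (-t) 1 ** g0 t = mat 1"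
    unfolding g0_def m2_mult mat1_m2 by simp_all
  then show ?thesis unfolding GL2_def using invertible_inv by blast
qed

lemma g0_mulv: "g0 t *v vec2 (v$1) (v$2 - t * v$1) = v"
  unfolding g0_def m2_mulv by (simp add: vec_eq_iff forall_2)

lemma g0_pre: "pre (g0 t) (sp v) = sp (vec2 (v$1) (v$2 - t * v$1))"
  using pre_sp[OF _ g0_mulv] g0_GL2 unfolding GL2_def by blast

lemma g0_triv:
  fixes f :: "('r::{comm_ring_1,finite}^2) set \<Rightarrow> 'k::field"
  assumes K: "is_ideal K" and t: "t \<in> K" and f: "f \<in> Wp K J"
  shows "st_act (g0 t) f = f"
proof
  fix L
  show "st_act (g0 t) f L = f L"
  proof (cases "L \<in> tits2")
    case True
    then obtain v where v: "unimodular v" "L = sp v" unfolding tits2_sp by blast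
    define w where "w = vec2 (v$1) (v$2 - t * v$1)"
    have w: "unimodular w" using unimod_of_mulv[of "g0 t"] g0_mulv v(1) unfolding w_def by metis
    have "det2 v w = - (t * (v$1 * v$1))" unfolding w_def det2_def by (simp add: algebra_simps)
    then have "det2 v w \<in> K" using ideal_neg[OF K ideal_mult_right[OF K t]] by simp
    then have "cong2 K L (pre (g0 t) L)" unfolding v(2) g0_pre w_def[symmetric]
      using cong2_iff[OF K v(1) w] by simp
    then show ?thesis using f unfolding Wp_def st_act_pre by auto
  next
    case False
    then have "pre (g0 t) L \<notin> tits2" using pre_notin g0_GL2 unfolding GL2_def by blast
    then show ?thesis using False f unfolding Wp_def steinberg2_iff st_act_pre by auto
  qed
qed

context piece begin

lemma g0_nontriv: "st_act (g0 t) psi \<noteq> (psi :: _ \<Rightarrow> 'k::field_char_0)"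
proof
  assume eq: "st_act (g0 t) psi = (psi :: _ \<Rightarrow> 'k)"
  have u: "unimodular (vec2 1 (-t))" unfolding unimodular_vec2 by (rule exI[of _ 1], rule exI[of _ 0]) simp
  have p: "pre (g0 t) L0 = sp (vec2 1 (-t))" unfolding L0_def g0_pre e1_def by simp
  have "- t \<notin> I" using ideal_neg[OF I, of "-t"] tI by auto
  then have a: "\<not> cong2 I L0 (sp (vec2 1 (-t)))" using cong2_L0[OF I u] by simp
  have b: "cong2 J L0 (sp (vec2 1 (-t)))" using cong2_L0[OF J u] ideal_neg[OF J tJ] by simp
  have "psi' (pre (g0 t) L0) = int n2" unfolding p psi'_def cls_def using a b by simp
  then have "(psi L0 :: 'k) = of_nat n2" using fun_cong[OF eq, of L0] unfolding st_act_pre psi_def by simp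
  moreover have "(psi L1 :: 'k) = of_nat n2" by (rule psi_L1)
  ultimately show False using psi_L1_ne[where 'k='k] by simp
qed

end

lemma noniso_gen:
  assumes g: "g \<in> G" and psiA: "\<psi> \<in> A" and ne: "st_act g \<psi> \<noteq> \<psi>" and invA: "st_act g \<psi> \<in> A"
    and triv: "\<forall>w\<in>B. st_act g w = w"
  shows "\<not> iso_rep G st_act A B" "\<not> iso_rep G st_act B A"
proof
  assume "iso_rep G st_act A B"
  then obtain \<phi> where \<phi>: "bij_betw \<phi> A B" "\<forall>g\<in>G. \<forall>w\<in>A. \<phi> (st_act g w) = st_act g (\<phi> w)"
    unfolding iso_rep_def by blast
  have "\<phi> \<psi> \<in> B" using \<phi>(1) psiA bij_betwE by blast
  then have "\<phi> (st_act g \<psi>) = \<phi> \<psi>" using \<phi>(2) g psiA triv by simp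
  then have "st_act g \<psi> = \<psi>" using \<phi>(1) invA psiA unfolding bij_betw_def inj_on_def by blast
  then show False using ne by simp
next
  show "\<not> iso_rep G st_act B A"
  proof
    assume "iso_rep G st_act B A"
    then obtain \<phi> where \<phi>: "bij_betw \<phi> B A" "\<forall>g\<in>G. \<forall>w\<in>B. \<phi> (st_act g w) = st_act g (\<phi> w)"
      unfolding iso_rep_def by blast
    obtain w where w: "w \<in> B" "\<psi> = \<phi> w" using \<phi>(1) psiA unfolding bij_betw_def by blast
    have "st_act g \<psi> = \<phi> (st_act g w)" using \<phi>(2) g w by simp
    also have "\<dots> = \<psi>" using triv w by simp
    finally show False using ne by simp
  qed
qed

lemma nontriv_gen:
  fixes A :: "(('r::comm_ring_1^2) set \<Rightarrow> 'k::field) set"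
  assumes g: "g \<in> G" and psiA: "\<psi> \<in> A" and ne: "st_act g \<psi> \<noteq> \<psi>" and invA: "st_act g \<psi> \<in> A"
  shows "\<not> iso_trivial G st_act A"
proof
  assume "iso_trivial G st_act A"
  then obtain \<phi> :: "_ \<Rightarrow> 'k" where \<phi>: "bij_betw \<phi> A UNIV" "\<forall>g\<in>G. \<forall>w\<in>A. \<phi> (st_act g w) = \<phi> w"
    unfolding iso_trivial_def by blast
  have "\<phi> (st_act g \<psi>) = \<phi> \<psi>" using \<phi>(2) g psiA by simp
  then have "st_act g \<psi> = \<psi>" using \<phi>(1) invA psiA unfolding bij_betw_def inj_on_def by blast
  then show False using ne by simp
qed

theorem mainTheorem6:
  fixes R :: "'r::{comm_ring_1,finite} itself"
    and K :: "'k::field_char_0 itself"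
  assumes "local_ring R" and "uniserial R"
  shows "\<exists>W :: nat \<Rightarrow> (('r ^2) set \<Rightarrow> 'k) set.
           direct_sum (steinberg2 :: (('r ^2) set \<Rightarrow> 'k) set) (ring_length R) W
         \<and> (\<forall>i < ring_length R. irreducible_rep (GL2 :: ('r ^2^2) set) st_act (W i))
         \<and> (\<forall>i < ring_length R. \<forall>j < ring_length R. i \<noteq> j \<longrightarrow>
              \<not> iso_rep (GL2 :: ('r ^2^2) set) st_act (W i) (W j))
         \<and> (\<forall>i < ring_length R. \<not> iso_trivial (GL2 :: ('r ^2^2) set) st_act (W i))"
proof -
  have U: "uniserial TYPE('r)" using assms(2) unfolding uniserial_def .
  define k where "k = ring_length R"
  have ex: "\<exists>c::nat \<Rightarrow> 'r set. (\<forall>i\<le>k. is_ideal (c i)) \<and> (\<forall>i<k. c i \<subset> c (Suc i)) \<and>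
     c 0 = {0} \<and> c k = UNIV \<and>
     (\<forall>i<k. \<forall>J. is_ideal J \<and> c i \<subseteq> J \<and> J \<subseteq> c (Suc i) \<longrightarrow> J = c i \<or> J = c (Suc i))"
    unfolding k_def by (rule chain_good)
  then obtain c :: "nat \<Rightarrow> 'r set" where cc: "(\<forall>i\<le>k. is_ideal (c i)) \<and> (\<forall>i<k. c i \<subset> c (Suc i)) \<and>
     c 0 = {0} \<and> c k = UNIV \<and>
     (\<forall>i<k. \<forall>J. is_ideal J \<and> c i \<subseteq> J \<and> J \<subseteq> c (Suc i) \<longrightarrow> J = c i \<or> J = c (Suc i))"
    by (rule exE)
  note cc' = cc[THEN conjunct1] cc[THEN conjunct2, THEN conjunct1] cc[THEN conjunct2, THEN conjunct2, THEN conjunct1]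
    cc[THEN conjunct2, THEN conjunct2, THEN conjunct2, THEN conjunct1]
    cc[THEN conjunct2, THEN conjunct2, THEN conjunct2, THEN conjunct2]
  have ideal: "\<forall>i\<le>k. is_ideal (c i)" and strict: "\<forall>i<k. c i \<subset> c (Suc i)"
    and c0: "c 0 = {0}" and ck: "c k = UNIV"
    and cons: "\<forall>i<k. \<forall>J. is_ideal J \<and> c i \<subseteq> J \<and> J \<subseteq> c (Suc i) \<longrightarrow> J = c i \<or> J = c (Suc i)"
    by (fact cc')+
  have mono: "\<forall>i j. i \<le> j \<and> j \<le> k \<longrightarrow> c i \<subseteq> c j" using chain_mono[OF strict] by blast
  define T where "T i = (SOME t. t \<in> c (Suc i) \<and> t \<notin> c i)" for i
  have T: "T i \<in> c (Suc i) \<and> T i \<notin> c i" if "i < k" for i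
  proof -
    have "\<exists>t. t \<in> c (Suc i) \<and> t \<notin> c i" using strict that by blast
    then show ?thesis unfolding T_def by (rule someI_ex)
  qed
  have P: "piece (c i) (c (Suc i)) (T i)" if i: "i < k" for i
    unfolding piece_def using U ideal i T[OF i] strict cons by (auto dest: psubset_imp_subset)
  define W where "W i = (Wp (c i) (c (Suc i)) :: (('r ^2) set \<Rightarrow> 'k) set)" for i
  have ds: "direct_sum (steinberg2 :: (('r ^2) set \<Rightarrow> 'k) set) k W"
    unfolding W_def by (rule dsum[OF ideal mono c0 ck])
  have irr: "\<forall>i<k. irreducible_rep (GL2 :: ('r ^2^2) set) st_act (W i)"
    unfolding W_def using piece.irreducible[OF P] by blast
  have key: "\<not> iso_rep (GL2 :: ('r ^2^2) set) st_act (W i) (W j) \<and> \<not> iso_rep (GL2 :: ('r ^2^2) set) st_act (W j) (W i)"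
    if ij: "i < j" "j < k" for i j
  proof -
    have Pi: "piece (c i) (c (Suc i)) (T i)" using P ij by simp
    let ?psi = "piece.psi (c i) (c (Suc i)) :: _ \<Rightarrow> 'k"
    have psiW: "?psi \<in> W i" unfolding W_def by (rule piece.psi_Wp[OF Pi])
    have ne: "st_act (g0 (T i)) ?psi \<noteq> ?psi" by (rule piece.g0_nontriv[OF Pi])
    have inv: "st_act (g0 (T i)) ?psi \<in> W i"
    proof -
      have ii: "is_ideal (c i)" "is_ideal (c (Suc i))" using ideal ij by auto
      show ?thesis using Wp_invariant[OF ii g0_GL2] psiW unfolding W_def by blast
    qed
    have sub: "c (Suc i) \<subseteq> c j" using mono ij by simp
    have triv: "\<forall>w\<in>W j. st_act (g0 (T i)) w = w"
      unfolding W_def using g0_triv[of "c j" "T i"] ideal ij sub T[of i] by auto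
    show ?thesis using noniso_gen[OF g0_GL2 psiW ne inv triv] by blast
  qed
  have noniso: "\<forall>i<k. \<forall>j<k. i \<noteq> j \<longrightarrow> \<not> iso_rep (GL2 :: ('r ^2^2) set) st_act (W i) (W j)"
  proof (intro allI impI)
    fix i j assume "i < k" "j < k" "i \<noteq> j"
    then show "\<not> iso_rep (GL2 :: ('r ^2^2) set) st_act (W i) (W j)"
      using key[of i j] key[of j i] by (cases "i < j") auto
  qed
  have ntriv: "\<forall>i<k. \<not> iso_trivial (GL2 :: ('r ^2^2) set) st_act (W i)"
  proof (intro allI impI)
    fix i assume ik: "i < k"
    have Pi: "piece (c i) (c (Suc i)) (T i)" using P ik by simp
    let ?psi = "piece.psi (c i) (c (Suc i)) :: _ \<Rightarrow> 'k"
    have psiW: "?psi \<in> W i" unfolding W_def by (rule piece.psi_Wp[OF Pi])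
    have ne: "st_act (g0 (T i)) ?psi \<noteq> ?psi" by (rule piece.g0_nontriv[OF Pi])
    have inv: "st_act (g0 (T i)) ?psi \<in> W i"
    proof -
      have ii: "is_ideal (c i)" "is_ideal (c (Suc i))" using ideal ik by auto
      show ?thesis using Wp_invariant[OF ii g0_GL2] psiW unfolding W_def by blast
    qed
    show "\<not> iso_trivial (GL2 :: ('r ^2^2) set) st_act (W i)"
      by (rule nontriv_gen[OF g0_GL2 psiW ne inv])
  qed
  show ?thesis unfolding k_def[symmetric] using ds irr noniso ntriv by blast
qed

end
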